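(* Consider an instance of the capacitated facility location problem with facilities $F=\{1,\ldots,m\}$ (opening cost $f_i\ge 0$, capacity $U_i$), clients $D=\{1,\ldots,n\}$ (demand $d_j>0$), and per-unit transportation costs $c_{ij}\in\mathbb{R}_{\ge 0}\cup\{\infty\}$ obeying the Monge property $c_{hj}+c_{ik}\le c_{hk}+c_{ij}$ for all $1\le h<i\le m$, $1\le j<k\le n$. For $i\in F$, $j\in D$, $0\le d\le d_j$, let $C(i,j,d)$ denote the optimal cost of the subinstance using only facilities $i,\ldots,m$ and clients $j,\ldots,n$, where client $j$ has only $d$ units of demand. Define the values computed by the dynamic program by the base cases $C(m+1,j,d)=\infty$ if $d+\sum_{k=j+1}^n d_k>0$, $C(i,n+1,0)=0$, and the recurrence $$C(i,j,d)=\min\Big(C(i+1,j,d),\; f_i+\min_{u:\,1\le u\le \min(U_i,\,d+\sum_{k=j+1}^n d_k)}\big(\mathrm{TC}(i,u,j,d)+C(i+1,\mathrm{NC}(i,u,j,d),\mathrm{DR}(i,u,j,d))\big)\Big),$$ where, when facility $i$ greedily serves $u$ units starting with the $d$ units at client $j$ and then clients $j+1,j+2,\ldots$: $\mathrm{NC}(i,u,j,d)=\ell$ is the first index $\ell\ge j$ with $d+\sum_{k=j+1}^{\ell}d_k>u$; $\mathrm{DR}(i,u,j,d)=d'$ is the demand left at client $\ell$, namely $d'=d_\ell-(u-(d+\sum_{k=j+1}^{\ell-1}d_k))$ if $\ell>j$ and $d'=d-u$ if $\ell=j$; and $\mathrm{TC}(i,u,j,d)$ is the transportation cost of this greedy assignment,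 equal to $c_{ij}(d-d')$ if $\ell=j$ and to $c_{ij}d+\sum_{k=j+1}^{\ell-1}c_{ik}d_k+c_{i\ell}(d_\ell-d')$ otherwise. Then this dynamic program correctly computes the optimal cost $C(i,j,d)$ (in particular, $C(1,1,d_1)$ is the optimal cost of the instance).
   Context: Capacitated facility location: choose open facilities $F'$ and fractional assignment $x_{ij}\in[0,1]$ with $\sum_i x_{ij}=1$, $\sum_j x_{ij}d_j\le U_i$, $x_{ij}>0$ only for $i\in F'$, minimizing $\sum_{i\in F'}f_i+\sum_{i,j}c_{ij}d_jx_{ij}$. All finite input numbers are integers; $a+\infty=\infty$. *)

theory Defs
  imports Main "HOL-Library.Extended_Real"
begin

definition rest :: "nat \<Rightarrow> (nat \<Rightarrow> nat) \<Rightarrow> nat \<Rightarrow> nat \<Rightarrow> nat" where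
  "rest n dem j d = d + (\<Sum>k\<in>{Suc j..n}. dem k)"

(* NC: first index l >= j with d + sum_{k=j+1}^l d_k > u; the index n+1 (convention d_{n+1}=0)
   is used when u equals all the remaining demand *)
definition NC :: "nat \<Rightarrow> (nat \<Rightarrow> nat) \<Rightarrow> nat \<Rightarrow> nat \<Rightarrow> nat \<Rightarrow> nat" where
  "NC n dem u j d = (LEAST l. j \<le> l \<and> (n < l \<or> u < d + (\<Sum>k\<in>{Suc j..l}. dem k)))"

definition DR :: "nat \<Rightarrow> (nat \<Rightarrow> nat) \<Rightarrow> nat \<Rightarrow> nat \<Rightarrow> nat \<Rightarrow> nat" where
  "DR n dem u j d = (let l = NC n dem u j d in
     if l = j then d - u
     else if l \<le> n then dem l - (u - (d + (\<Sum>k\<in>{Suc j..l - 1}. dem k)))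
     else 0)"

definition TC :: "nat \<Rightarrow> (nat \<Rightarrow> nat) \<Rightarrow> (nat \<Rightarrow> nat \<Rightarrow> enat) \<Rightarrow> nat \<Rightarrow> nat \<Rightarrow> nat \<Rightarrow> nat \<Rightarrow> enat" where
  "TC n dem c i u j d = (let l = NC n dem u j d; d' = DR n dem u j d in
     if l = j then c i j * enat (d - d')
     else c i j * enat d + (\<Sum>k\<in>{Suc j..l - 1}. c i k * enat (dem k))
          + (if l \<le> n then c i l * enat (dem l - d') else 0))"

definition cfl_feasible ::
  "nat set \<Rightarrow> nat set \<Rightarrow> (nat \<Rightarrow> nat) \<Rightarrow> (nat \<Rightarrow> nat) \<Rightarrow> nat set \<Rightarrow> (nat \<Rightarrow> nat \<Rightarrow> real) \<Rightarrow> bool" where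
  "cfl_feasible fac cl dem U Fo x \<longleftrightarrow>
     Fo \<subseteq> fac \<and>
     (\<forall>a\<in>fac. \<forall>k\<in>cl. 0 \<le> x a k \<and> x a k \<le> 1) \<and>
     (\<forall>k\<in>cl. (\<Sum>a\<in>fac. x a k) = 1) \<and>
     (\<forall>a\<in>fac. (\<Sum>k\<in>cl. x a k * real (dem k)) \<le> real (U a)) \<and>
     (\<forall>a\<in>fac. \<forall>k\<in>cl. 0 < x a k \<longrightarrow> a \<in> Fo)"

definition cfl_cost ::
  "nat set \<Rightarrow> nat set \<Rightarrow> (nat \<Rightarrow> nat) \<Rightarrow> (nat \<Rightarrow> nat) \<Rightarrow> (nat \<Rightarrow> nat \<Rightarrow> enat) \<Rightarrow> nat set \<Rightarrow> (nat \<Rightarrow> nat \<Rightarrow> real) \<Rightarrow> ereal" where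
  "cfl_cost fac cl dem f c Fo x =
     (\<Sum>a\<in>Fo. ereal (real (f a))) +
     (\<Sum>a\<in>fac. \<Sum>k\<in>cl. ereal_of_enat (c a k) * ereal (real (dem k) * x a k))"

(* optimal cost; Inf {} = \<infinity> if infeasible *)
definition cfl_opt ::
  "nat set \<Rightarrow> nat set \<Rightarrow> (nat \<Rightarrow> nat) \<Rightarrow> (nat \<Rightarrow> nat) \<Rightarrow> (nat \<Rightarrow> nat) \<Rightarrow> (nat \<Rightarrow> nat \<Rightarrow> enat) \<Rightarrow> ereal" where
  "cfl_opt fac cl dem f U c =
     Inf {cfl_cost fac cl dem f c Fo x | Fo x. cfl_feasible fac cl dem U Fo x}"

(* subinstance: facilities i..m, clients j..n, client j has demand d
   (client j is absent if d = 0) *)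
definition sub_dem :: "(nat \<Rightarrow> nat) \<Rightarrow> nat \<Rightarrow> nat \<Rightarrow> nat \<Rightarrow> nat" where
  "sub_dem dem j d = (\<lambda>k. if k = j then d else dem k)"

definition sub_clients :: "nat \<Rightarrow> nat \<Rightarrow> nat \<Rightarrow> nat set" where
  "sub_clients n j d = {k. j \<le> k \<and> k \<le> n \<and> (k = j \<longrightarrow> 0 < d)}"

definition sub_opt ::
  "nat \<Rightarrow> nat \<Rightarrow> (nat \<Rightarrow> nat) \<Rightarrow> (nat \<Rightarrow> nat) \<Rightarrow> (nat \<Rightarrow> nat) \<Rightarrow> (nat \<Rightarrow> nat \<Rightarrow> enat)
     \<Rightarrow> nat \<Rightarrow> nat \<Rightarrow> nat \<Rightarrow> ereal" where
  "sub_opt m n dem f U c i j d = cfl_opt {i..m} (sub_clients n j d) (sub_dem dem j d) f U c"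

end

theory Submission
  imports Defs
begin

locale xch =
  fixes A :: "'a set" and K :: "nat set" and yi yt ci :: "nat \<Rightarrow> real" and ya ca :: "'a \<Rightarrow> nat \<Rightarrow> real"
  assumes finA: "finite A" and finK: "finite K"
    and yi0: "\<forall>k\<in>K. 0 \<le> yi k" and yt0: "\<forall>k\<in>K. 0 \<le> yt k" and ya0: "\<forall>a\<in>A. \<forall>k\<in>K. 0 \<le> ya a k"
    and bal: "(\<Sum>k\<in>K. yt k) = (\<Sum>k\<in>K. yi k)"
    and room: "\<forall>k\<in>K. yt k - yi k \<le> (\<Sum>a\<in>A. ya a k)"
    and ord: "\<forall>k\<in>K. \<forall>k'\<in>K. yi k < yt k \<longrightarrow> yt k' < yi k' \<longrightarrow> k < k'"
    and mon: "\<forall>a\<in>A. \<forall>k\<in>K. \<forall>k'\<in>K. k < k' \<longrightarrow> 0 < ya a k \<longrightarrow> 0 < yi k' \<longrightarrow>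
                yi k < yt k \<longrightarrow> yt k' < yi k' \<longrightarrow> ci k + ca a k' \<le> ci k' + ca a k"
begin

definition "dp k = max (yt k - yi k) 0"
definition "dm k = max (yi k - yt k) 0"
definition "Rs k = (\<Sum>a\<in>A. ya a k)"
definition "Dl = (\<Sum>k\<in>K. dp k)"
definition "L a = (\<Sum>k\<in>K. dp k * ya a k / Rs k)"
definition "y' a k = ya a k - dp k * ya a k / Rs k + dm k * L a / Dl"
definition "W k k' a = dp k * ya a k / Rs k * (dm k' / Dl)"

lemma dp0: "0 \<le> dp k" and dm0: "0 \<le> dm k" by (auto simp: dp_def dm_def)

lemma Rs0: "k \<in> K \<Longrightarrow> 0 \<le> Rs k"
  unfolding Rs_def using ya0 by (auto intro: sum_nonneg)

lemma dp_le: "k \<in> K \<Longrightarrow> dp k \<le> Rs k"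
  using room Rs0 unfolding dp_def Rs_def by auto

lemma dp_sum: assumes "k \<in> K" shows "dp k * (\<Sum>a\<in>A. ya a k / Rs k) = dp k"
proof (cases "Rs k = 0")
  case True then show ?thesis using dp_le[OF assms] dp0[of k] by simp
next
  case False
  have "(\<Sum>a\<in>A. ya a k / Rs k) = (\<Sum>a\<in>A. ya a k) / Rs k" by (simp add: sum_divide_distrib)
  also have "\<dots> = Rs k / Rs k" by (simp add: Rs_def)
  finally have "(\<Sum>a\<in>A. ya a k / Rs k) = Rs k / Rs k" .
  then show ?thesis using False by simp
qed

lemma sum_dp_dm: "(\<Sum>k\<in>K. dp k) = (\<Sum>k\<in>K. dm k)"
proof -
  have "(\<Sum>k\<in>K. dp k) - (\<Sum>k\<in>K. dm k) = (\<Sum>k\<in>K. yt k - yi k)"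
    unfolding sum_subtractf[symmetric] by (rule sum.cong) (auto simp: dp_def dm_def)
  also have "\<dots> = 0" using bal by (simp add: sum_subtractf)
  finally show ?thesis by simp
qed

lemma Dl0: "0 \<le> Dl" unfolding Dl_def by (simp add: sum_nonneg dp0)

lemma Dl_zero: assumes "Dl = 0" "k \<in> K" shows "dp k = 0" "dm k = 0"
proof -
  show "dp k = 0" using assms finK dp0 unfolding Dl_def by (simp add: sum_nonneg_eq_0_iff)
  have "(\<Sum>k\<in>K. dm k) = 0" using assms sum_dp_dm unfolding Dl_def by simp
  then show "dm k = 0" using assms finK dm0 by (simp add: sum_nonneg_eq_0_iff)
qed

lemma L0: "a \<in> A \<Longrightarrow> 0 \<le> L a"
  unfolding L_def using ya0 Rs0 dp0 by (auto intro!: sum_nonneg divide_nonneg_nonneg)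

lemma sum_L: "(\<Sum>a\<in>A. L a) = Dl"
proof -
  have "(\<Sum>a\<in>A. L a) = (\<Sum>k\<in>K. \<Sum>a\<in>A. dp k * ya a k / Rs k)"
    unfolding L_def by (rule sum.swap)
  also have "\<dots> = (\<Sum>k\<in>K. dp k * (\<Sum>a\<in>A. ya a k / Rs k))"
    by (simp add: sum_distrib_left)
  also have "\<dots> = Dl" unfolding Dl_def by (rule sum.cong) (auto simp: dp_sum)
  finally show ?thesis .
qed

lemma y'_nonneg: assumes "a \<in> A" "k \<in> K" shows "0 \<le> y' a k"
proof -
  have "dp k * ya a k / Rs k \<le> ya a k"
  proof (cases "Rs k = 0")
    case True then show ?thesis using ya0 assms by simp
  next
    case False
    then have "Rs k > 0" using Rs0 assms by (simp add: less_le)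
    moreover have "dp k * ya a k \<le> Rs k * ya a k"
      using dp_le[OF assms(2)] ya0 assms by (simp add: mult_right_mono)
    ultimately show ?thesis by (simp add: divide_le_eq mult.commute)
  qed
  moreover have "0 \<le> dm k * L a / Dl" using dm0 L0[OF assms(1)] Dl0 by simp
  ultimately show ?thesis unfolding y'_def by linarith
qed

lemma y'_row: assumes "a \<in> A" shows "(\<Sum>k\<in>K. y' a k) = (\<Sum>k\<in>K. ya a k)"
proof -
  have "(\<Sum>k\<in>K. y' a k) = (\<Sum>k\<in>K. ya a k) - (\<Sum>k\<in>K. dp k * ya a k / Rs k) + (\<Sum>k\<in>K. dm k * L a / Dl)"
    unfolding y'_def by (simp add: sum.distrib sum_subtractf)
  also have "(\<Sum>k\<in>K. dm k * L a / Dl) = L a * (\<Sum>k\<in>K. dm k) / Dl"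
    by (simp add: sum_distrib_right sum_divide_distrib mult.commute)
  finally have "(\<Sum>k\<in>K. y' a k) = (\<Sum>k\<in>K. ya a k) - L a + L a * (\<Sum>k\<in>K. dm k) / Dl"
    unfolding L_def .
  also have "L a * (\<Sum>k\<in>K. dm k) / Dl = L a"
  proof (cases "Dl = 0")
    case True
    then have "L a = 0" unfolding L_def using Dl_zero(1)[OF True] by simp
    then show ?thesis by simp
  next
    case False then show ?thesis using sum_dp_dm unfolding Dl_def by simp
  qed
  finally show ?thesis by simp
qed

lemma y'_col: assumes "k \<in> K" shows "(\<Sum>a\<in>A. y' a k) = Rs k - (yt k - yi k)"
proof -
  have "(\<Sum>a\<in>A. y' a k) = Rs k - dp k * (\<Sum>a\<in>A. ya a k / Rs k) + dm k * (\<Sum>a\<in>A. L a) / Dl"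
    unfolding y'_def Rs_def by (simp add: sum.distrib sum_subtractf sum_distrib_left sum_divide_distrib)
  also have "\<dots> = Rs k - dp k + dm k * Dl / Dl" using dp_sum[OF assms] sum_L by simp
  also have "dm k * Dl / Dl = dm k" using Dl_zero[OF _ assms] by (cases "Dl = 0") auto
  finally show ?thesis unfolding dp_def dm_def by auto
qed

lemma y'_supp: assumes "a \<in> A" "k \<in> K" "0 < y' a k"
  shows "0 < ya a k \<or> (yt k < yi k \<and> (\<exists>k0\<in>K. yi k0 < yt k0 \<and> 0 < ya a k0))"
proof (rule ccontr)
  assume H: "\<not> ?thesis"
  then have z: "ya a k = 0" using ya0 assms by force
  have "dm k * L a / Dl = 0"
  proof (cases "yt k < yi k")
    case False then show ?thesis by (simp add: dm_def)
  next
    case True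
    then have "\<forall>k0\<in>K. \<not> (yi k0 < yt k0 \<and> 0 < ya a k0)" using H by blast
    then have "\<forall>k0\<in>K. dp k0 * ya a k0 / Rs k0 = 0" using ya0 assms(1)
      unfolding dp_def by (force simp: max_def)
    then have "L a = 0" unfolding L_def using sum.neutral[of K "\<lambda>k. dp k * ya a k / Rs k"] by blast
    then show ?thesis by simp
  qed
  then show False using assms(3) z unfolding y'_def by (simp del: divide_eq_0_iff mult_eq_0_iff)
qed


lemma W0: "a \<in> A \<Longrightarrow> k \<in> K \<Longrightarrow> 0 \<le> W k k' a"
  unfolding W_def using ya0 Rs0 dp0 dm0 Dl0 by (auto intro!: mult_nonneg_nonneg divide_nonneg_nonneg)

lemma W_sum_a: assumes "k \<in> K" shows "(\<Sum>a\<in>A. W k k' a) = dp k * (dm k' / Dl)"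
proof -
  have "\<forall>a. W k k' a = (dp k * (dm k' / Dl)) * (ya a k / Rs k)" unfolding W_def by (simp add: ac_simps)
  then have "(\<Sum>a\<in>A. W k k' a) = (dp k * (dm k' / Dl)) * (\<Sum>a\<in>A. ya a k / Rs k)"
    by (simp only: sum_distrib_left)
  then show ?thesis using dp_sum[OF assms] by (simp add: ac_simps)
qed

lemma sum_dm_div: assumes "Dl \<noteq> 0" shows "(\<Sum>k'\<in>K. dm k' / Dl) = 1"
  using assms sum_dp_dm unfolding Dl_def by (simp add: sum_divide_distrib[symmetric])

lemma W_sum_k': assumes "Dl \<noteq> 0" shows "(\<Sum>k'\<in>K. W k k' a) = dp k * ya a k / Rs k"
proof -
  have "(\<Sum>k'\<in>K. W k k' a) = dp k * ya a k / Rs k * (\<Sum>k'\<in>K. dm k' / Dl)"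
    unfolding W_def by (simp add: sum_distrib_left)
  then show ?thesis using sum_dm_div[OF assms] by simp
qed

lemma W_sum_k: "(\<Sum>k\<in>K. W k k' a) = L a * (dm k' / Dl)"
  unfolding W_def L_def by (simp only: sum_distrib_right)

lemma W_term: assumes "a \<in> A" "k \<in> K" "k' \<in> K"
  shows "W k k' a * (ci k - ci k' - ca a k + ca a k') \<le> 0"
proof (cases "W k k' a = 0")
  case True then show ?thesis by simp
next
  case False
  then have "dp k \<noteq> 0" "ya a k \<noteq> 0" "dm k' \<noteq> 0" unfolding W_def by auto
  then have h: "yi k < yt k" "yt k' < yi k'" "0 < ya a k" using ya0 assms
    unfolding dp_def dm_def by (auto simp: max_def less_le split: if_splits)
  then have "k < k'" using ord assms by blast
  moreover have "0 < yi k'" using h yt0 assms by force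
  ultimately have "ci k + ca a k' \<le> ci k' + ca a k" using mon assms h by blast
  then show ?thesis using W0[OF assms(1,2), of k'] by (simp add: mult_nonpos_nonneg mult_le_0_iff)
qed

lemma cost: "(\<Sum>k\<in>K. ci k * yt k) + (\<Sum>a\<in>A. \<Sum>k\<in>K. ca a k * y' a k)
          \<le> (\<Sum>k\<in>K. ci k * yi k) + (\<Sum>a\<in>A. \<Sum>k\<in>K. ca a k * ya a k)"
proof (cases "Dl = 0")
  case True
  then have "\<forall>k\<in>K. yt k = yi k" using Dl_zero unfolding dp_def dm_def by (force simp: max_def split: if_splits)
  moreover have "\<forall>a\<in>A. \<forall>k\<in>K. y' a k = ya a k" unfolding y'_def using Dl_zero[OF True] by simp
  ultimately show ?thesis by simp
next
  case False
  define S where "S = (\<Sum>k\<in>K. \<Sum>k'\<in>K. \<Sum>a\<in>A. W k k' a * (ci k - ci k' - ca a k + ca a k'))"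
  have S0: "S \<le> 0" unfolding S_def
    by (intro sum_nonpos) (simp add: W_term)
  define S1 where "S1 = (\<Sum>k\<in>K. \<Sum>k'\<in>K. \<Sum>a\<in>A. W k k' a * ci k)"
  define S2 where "S2 = (\<Sum>k\<in>K. \<Sum>k'\<in>K. \<Sum>a\<in>A. W k k' a * ci k')"
  define S3 where "S3 = (\<Sum>k\<in>K. \<Sum>k'\<in>K. \<Sum>a\<in>A. W k k' a * ca a k)"
  define S4 where "S4 = (\<Sum>k\<in>K. \<Sum>k'\<in>K. \<Sum>a\<in>A. W k k' a * ca a k')"
  have "S = S1 - S2 - S3 + S4" unfolding S_def S1_def S2_def S3_def S4_def
    by (simp add: sum.distrib sum_subtractf algebra_simps)
  have e1: "S1 = (\<Sum>k\<in>K. dp k * ci k)"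
  proof -
    have "S1 = (\<Sum>k\<in>K. \<Sum>k'\<in>K. (\<Sum>a\<in>A. W k k' a) * ci k)" unfolding S1_def
      by (simp add: sum_distrib_right)
    also have "\<dots> = (\<Sum>k\<in>K. \<Sum>k'\<in>K. dp k * ci k * (dm k' / Dl))"
      by (intro sum.cong refl) (simp add: W_sum_a)
    also have "\<dots> = (\<Sum>k\<in>K. dp k * ci k * (\<Sum>k'\<in>K. dm k' / Dl))"
      by (simp add: sum_distrib_left)
    finally show ?thesis using sum_dm_div[OF False] by simp
  qed
  have e2: "S2 = (\<Sum>k'\<in>K. dm k' * ci k')"
  proof -
    have "S2 = (\<Sum>k\<in>K. \<Sum>k'\<in>K. (\<Sum>a\<in>A. W k k' a) * ci k')" unfolding S2_def
      by (simp add: sum_distrib_right)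
    also have "\<dots> = (\<Sum>k\<in>K. \<Sum>k'\<in>K. dp k * (dm k' / Dl * ci k'))"
      by (intro sum.cong refl) (simp add: W_sum_a)
    also have "\<dots> = (\<Sum>k'\<in>K. \<Sum>k\<in>K. dp k * (dm k' / Dl * ci k'))" by (rule sum.swap)
    also have "\<dots> = (\<Sum>k'\<in>K. Dl * (dm k' / Dl * ci k'))"
      unfolding Dl_def by (simp only: sum_distrib_right)
    finally show ?thesis using False by simp
  qed
  have e3: "S3 = (\<Sum>a\<in>A. \<Sum>k\<in>K. ca a k * (dp k * ya a k / Rs k))"
  proof -
    have "S3 = (\<Sum>k\<in>K. \<Sum>a\<in>A. \<Sum>k'\<in>K. W k k' a * ca a k)" unfolding S3_def
      by (intro sum.cong refl) (rule sum.swap)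
    also have "\<dots> = (\<Sum>k\<in>K. \<Sum>a\<in>A. (\<Sum>k'\<in>K. W k k' a) * ca a k)"
      by (simp add: sum_distrib_right)
    also have "\<dots> = (\<Sum>k\<in>K. \<Sum>a\<in>A. ca a k * (dp k * ya a k / Rs k))"
      by (simp add: W_sum_k'[OF False] mult.commute)
    also have "\<dots> = (\<Sum>a\<in>A. \<Sum>k\<in>K. ca a k * (dp k * ya a k / Rs k))" by (rule sum.swap)
    finally show ?thesis .
  qed
  have e4: "S4 = (\<Sum>a\<in>A. \<Sum>k'\<in>K. ca a k' * (dm k' * L a / Dl))"
  proof -
    have "S4 = (\<Sum>k'\<in>K. \<Sum>k\<in>K. \<Sum>a\<in>A. W k k' a * ca a k')" unfolding S4_def by (rule sum.swap)
    also have "\<dots> = (\<Sum>k'\<in>K. \<Sum>a\<in>A. \<Sum>k\<in>K. W k k' a * ca a k')"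
      by (intro sum.cong refl) (rule sum.swap)
    also have "\<dots> = (\<Sum>k'\<in>K. \<Sum>a\<in>A. (\<Sum>k\<in>K. W k k' a) * ca a k')"
      by (simp add: sum_distrib_right)
    also have "\<dots> = (\<Sum>k'\<in>K. \<Sum>a\<in>A. ca a k' * (dm k' * L a / Dl))"
      by (simp add: W_sum_k mult.commute)
    also have "\<dots> = (\<Sum>a\<in>A. \<Sum>k'\<in>K. ca a k' * (dm k' * L a / Dl))" by (rule sum.swap)
    finally show ?thesis .
  qed
  have n1: "(\<Sum>k\<in>K. ci k * yt k) = (\<Sum>k\<in>K. ci k * yi k) + (\<Sum>k\<in>K. dp k * ci k) - (\<Sum>k\<in>K. dm k * ci k)"
  proof -
    have "\<forall>k. ci k * yt k = ci k * yi k + dp k * ci k - dm k * ci k"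
      unfolding dp_def dm_def by (auto simp: max_def algebra_simps)
    then show ?thesis by (simp add: sum.distrib sum_subtractf)
  qed
  have n2: "(\<Sum>a\<in>A. \<Sum>k\<in>K. ca a k * y' a k) = (\<Sum>a\<in>A. \<Sum>k\<in>K. ca a k * ya a k)
      - (\<Sum>a\<in>A. \<Sum>k\<in>K. ca a k * (dp k * ya a k / Rs k)) + (\<Sum>a\<in>A. \<Sum>k'\<in>K. ca a k' * (dm k' * L a / Dl))"
    unfolding y'_def by (simp add: sum.distrib sum_subtractf algebra_simps)
  show ?thesis using S0 \<open>S = S1 - S2 - S3 + S4\<close> e1 e2 e3 e4 n1 n2 by linarith
qed

end

locale cflp =
  fixes m n :: nat and f U dem :: "nat \<Rightarrow> nat" and c :: "nat \<Rightarrow> nat \<Rightarrow> enat"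
  assumes dem_pos: "\<forall>j\<in>{1..n}. 0 < dem j"
    and monge: "\<forall>h i j k. 1 \<le> h \<and> h < i \<and> i \<le> m \<and> 1 \<le> j \<and> j < k \<and> k \<le> n
                   \<longrightarrow> c h j + c i k \<le> c h k + c i j"
begin

definition Pn :: "nat \<Rightarrow> nat" where "Pn k = (\<Sum>t\<in>{1..k}. dem t)"
abbreviation DD where "DD \<equiv> Pn n"
definition ovn :: "nat \<Rightarrow> nat \<Rightarrow> nat \<Rightarrow> nat" where
  "ovn k a b = min b (Pn k) - max a (Pn (k-1))"
definition ov :: "nat \<Rightarrow> real \<Rightarrow> real \<Rightarrow> real" where
  "ov k s e = max 0 (min e (real (Pn k)) - max s (real (Pn (k-1))))"
definition serve :: "nat \<Rightarrow> nat \<Rightarrow> nat \<Rightarrow> enat" where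
  "serve i a b = (\<Sum>k\<in>{1..n}. c i k * enat (ovn k a b))"
definition cn :: "nat \<Rightarrow> nat \<Rightarrow> nat" where
  "cn a k = (case c a k of enat x \<Rightarrow> x | \<infinity> \<Rightarrow> 0)"
definition cr :: "nat \<Rightarrow> nat \<Rightarrow> real" where "cr a k = real (cn a k)"

fun Rk :: "nat \<Rightarrow> nat \<Rightarrow> enat" where
  "Rk 0 p = (if p < DD then \<infinity> else 0)"
| "Rk (Suc t) p = min (Rk t p) (enat (f (m - t)) +
      (INF u\<in>{1..min (U (m - t)) (DD - p)}. serve (m - t) p (p+u) + Rk t (p+u)))"

definition R :: "nat \<Rightarrow> nat \<Rightarrow> enat" where "R i p = Rk (m + 1 - i) p"

lemma R_base: "R (m+1) p = (if p < DD then \<infinity> else 0)"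
  by (simp add: R_def)

lemma R_rec: assumes "i \<in> {1..m}"
  shows "R i p = min (R (i+1) p) (enat (f i) +
      (INF u\<in>{1..min (U i) (DD - p)}. serve i p (p+u) + R (i+1) (p+u)))"
proof -
  have e: "m + 1 - i = Suc (m - i)" and e2: "m - (m - i) = i" and e3: "m + 1 - (i+1) = m - i"
    using assms by auto
  show ?thesis unfolding R_def e e3 by (simp only: Rk.simps e2)
qed

lemma R_le_next: assumes "i \<in> {1..m}" shows "R i p \<le> R (i+1) p"
  unfolding R_rec[OF assms] by (rule min.cobounded1)

lemma R_le_step: assumes "i \<in> {1..m}" "a < b" "b \<le> DD" "b - a \<le> U i"
  shows "R i a \<le> enat (f i) + serve i a b + R (i+1) b"
proof -
  have "b - a \<in> {1..min (U i) (DD - a)}" using assms diff_le_mono[of b DD a] by simp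
  then have h: "(INF u\<in>{1..min (U i) (DD - a)}. serve i a (a+u) + R (i+1) (a+u)) \<le> serve i a b + R (i+1) b"
    using assms(2) INF_lower[of "b-a" "{1..min (U i) (DD - a)}" "\<lambda>u. serve i a (a+u) + R (i+1) (a+u)"]
    by (simp only: le_add_diff_inverse less_imp_le_nat)
  have "enat (f i) + (INF u\<in>{1..min (U i) (DD - a)}. serve i a (a+u) + R (i+1) (a+u)) \<le> enat (f i) + serve i a b + R (i+1) b"
    using add_left_mono[OF h, of "enat (f i)"] by (simp only: add.assoc)
  then show ?thesis unfolding R_rec[OF assms(1), of a] by (rule min.coboundedI2)
qed

lemma R_end: "i \<in> {1..m+1} \<Longrightarrow> R i DD = 0"
proof (induction "m + 1 - i" arbitrary: i)
  case 0 then show ?case using R_base[of DD] by (simp)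
next
  case (Suc t)
  then have i: "i \<in> {1..m}" by auto
  have "R (i+1) DD = 0" using Suc by auto
  then show ?case using R_rec[OF i, of DD] by simp
qed

lemma Pn_0[simp]: "Pn 0 = 0" by (simp add: Pn_def)
lemma Pn_Suc[simp]: "Pn (Suc k) = Pn k + dem (Suc k)" by (simp add: Pn_def)
lemma Pn_mono: "a \<le> b \<Longrightarrow> Pn a \<le> Pn b"
  unfolding Pn_def by (rule sum_mono2) auto
lemma Pn_diff: "k \<ge> 1 \<Longrightarrow> Pn k = Pn (k-1) + dem k"
  by (cases k) auto

lemma ov_nonneg: "0 \<le> ov k s e" by (simp add: ov_def)

lemma ov_split: assumes "s \<le> z" "z \<le> e" shows "ov k s e = ov k s z + ov k z e"
proof -
  have "real (Pn (k-1)) \<le> real (Pn k)" using Pn_mono[of "k-1" k] by simp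
  then show ?thesis using assms unfolding ov_def by (auto simp: max_def min_def)
qed

lemma ov_sum_gen: assumes "0 \<le> s" "s \<le> e"
  shows "(\<Sum>k\<in>{1..N}. ov k s e) = max 0 (min e (real (Pn N)) - s)"
proof (induction N)
  case 0 then show ?case using assms by (simp add: max_def min_def)
next
  case (Suc N)
  have "{1..Suc N} = insert (Suc N) {1..N}" by auto
  then have "(\<Sum>k\<in>{1..Suc N}. ov k s e) = ov (Suc N) s e + (\<Sum>k\<in>{1..N}. ov k s e)" by simp
  also have "\<dots> = max 0 (min e (real (Pn (Suc N))) - s)"
    using Suc assms unfolding ov_def by (auto simp: max_def min_def)
  finally show ?case .
qed

lemma ov_sum: assumes "0 \<le> s" "s \<le> e" "e \<le> real DD"
  shows "(\<Sum>k\<in>{1..n}. ov k s e) = e - s"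
  using ov_sum_gen[OF assms(1,2), of n] assms by (simp add: max_def min_def)

lemma ovn_real: "real (ovn k a b) = ov k (real a) (real b)"
  unfolding ovn_def ov_def by (auto simp: max_def min_def of_nat_diff)

end

context cflp begin

definition feas :: "nat \<Rightarrow> real \<Rightarrow> nat set \<Rightarrow> (nat \<Rightarrow> nat \<Rightarrow> real) \<Rightarrow> bool" where
  "feas i s Fo y \<longleftrightarrow> Fo \<subseteq> {i..m} \<and> (\<forall>a\<in>{i..m}. \<forall>k\<in>{1..n}. 0 \<le> y a k) \<and>
     (\<forall>k\<in>{1..n}. (\<Sum>a\<in>{i..m}. y a k) = ov k s DD) \<and>
     (\<forall>a\<in>{i..m}. (\<Sum>k\<in>{1..n}. y a k) \<le> real (U a)) \<and>
     (\<forall>a\<in>{i..m}. \<forall>k\<in>{1..n}. 0 < y a k \<longrightarrow> a \<in> Fo \<and> c a k \<noteq> \<infinity>)"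

definition rcost :: "nat \<Rightarrow> nat set \<Rightarrow> (nat \<Rightarrow> nat \<Rightarrow> real) \<Rightarrow> real" where
  "rcost i Fo y = (\<Sum>a\<in>Fo. real (f a)) + (\<Sum>a\<in>{i..m}. \<Sum>k\<in>{1..n}. cr a k * y a k)"

lemma cr0: "0 \<le> cr a k" by (simp add: cr_def)

lemma serve_fin: assumes "serve i a b \<noteq> \<infinity>" "k \<in> {1..n}" "0 < ovn k a b"
  shows "c i k \<noteq> \<infinity>"
proof
  assume h: "c i k = \<infinity>"
  have "c i k * enat (ovn k a b) \<le> serve i a b" unfolding serve_def
    by (rule member_le_sum) (use assms in auto)
  then show False using h assms by (simp add: zero_enat_def)
qed

lemma serve_real: assumes "\<forall>k\<in>{1..n}. 0 < ovn k a b \<longrightarrow> c i k \<noteq> \<infinity>"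
  shows "ereal_of_enat (serve i a b) = ereal (\<Sum>k\<in>{1..n}. cr i k * ov k a b)"
proof -
  have "\<forall>k\<in>{1..n}. c i k * enat (ovn k a b) = of_nat (cn i k * ovn k a b)"
  proof
    fix k assume k: "k \<in> {1..n}"
    show "c i k * enat (ovn k a b) = of_nat (cn i k * ovn k a b)"
    proof (cases "ovn k a b = 0")
      case True then show ?thesis by (simp add: zero_enat_def[symmetric])
    next
      case False then have "c i k \<noteq> \<infinity>" using assms k by auto
      then obtain x where "c i k = enat x" by (cases "c i k") auto
      then show ?thesis by (simp add: cn_def of_nat_eq_enat)
    qed
  qed
  then have "serve i a b = of_nat (\<Sum>k\<in>{1..n}. cn i k * ovn k a b)"
    unfolding serve_def by (simp add: of_nat_sum)
  then show ?thesis by (simp add: of_nat_eq_enat cr_def ovn_real of_nat_sum)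
qed

lemma ov_empty: "ov k s s = 0" unfolding ov_def by (auto simp: max_def min_def)

lemma partA: "i \<in> {1..m+1} \<Longrightarrow> p \<le> DD \<Longrightarrow> R i p \<noteq> \<infinity> \<Longrightarrow>
    \<exists>Fo y. feas i (real p) Fo y \<and> ereal_of_enat (R i p) = ereal (rcost i Fo y)"
proof (induction "m + 1 - i" arbitrary: i p)
  case 0
  then have i: "i = m + 1" by auto
  then have p: "p = DD" using 0 R_base by (auto split: if_splits)
  have "feas i (real p) {} (\<lambda>_ _. 0)" unfolding feas_def using i p ov_empty by auto
  moreover have "rcost i {} (\<lambda>_ _. 0) = 0" unfolding rcost_def by simp
  moreover have "R i p = 0" using i p R_base by simp
  ultimately show ?case by auto
next
  case (Suc t)
  then have i: "i \<in> {1..m}" by auto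
  have IH: "\<And>q. q \<le> DD \<Longrightarrow> R (i+1) q \<noteq> \<infinity> \<Longrightarrow>
    \<exists>Fo y. feas (i+1) (real q) Fo y \<and> ereal_of_enat (R (i+1) q) = ereal (rcost (i+1) Fo y)"
    using Suc i by auto
  have ins: "{i..m} = insert i {i+1..m}" using i by auto
  define S where "S = {1..min (U i) (DD - p)}"
  define X where "X = enat (f i) + (INF u\<in>S. serve i p (p+u) + R (i+1) (p+u))"
  have Rr: "R i p = min (R (i+1) p) X" unfolding X_def S_def by (rule R_rec[OF i])
  show ?case
  proof (cases "R (i+1) p \<le> X")
    case True
    then have e: "R i p = R (i+1) p" using Rr by simp
    obtain Fo y where fy: "feas (i+1) (real p) Fo y" "ereal_of_enat (R (i+1) p) = ereal (rcost (i+1) Fo y)"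
      using IH Suc.prems e by metis
    define y' where "y' = y(i := (\<lambda>_. 0))"
    have yy: "\<forall>a\<in>{i+1..m}. y' a = y a" unfolding y'_def by auto
    have "feas i (real p) Fo y'"
      using fy(1) unfolding feas_def ins using yy by (auto simp: y'_def)
    moreover have "rcost i Fo y' = rcost (i+1) Fo y"
      unfolding rcost_def ins using yy by (simp add: y'_def)
    ultimately show ?thesis using fy e by metis
  next
    case False
    then have e: "R i p = X" using Rr by simp
    have Sfin: "finite S" unfolding S_def by simp
    have Sne: "S \<noteq> {}"
    proof
      assume "S = {}" then have "X = \<infinity>" unfolding X_def by (simp add: top_enat_def)
      then show False using e Suc.prems by simp
    qed
    have "(INF u\<in>S. serve i p (p+u) + R (i+1) (p+u)) \<in> (\<lambda>u. serve i p (p+u) + R (i+1) (p+u)) ` S"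
      using cInf_eq_Min[of "(\<lambda>u. serve i p (p+u) + R (i+1) (p+u)) ` S"] Min_in Sfin Sne by auto
    then obtain u where u: "u \<in> S" and Xu: "X = enat (f i) + (serve i p (p+u) + R (i+1) (p+u))"
      unfolding X_def by auto
    have fin1: "serve i p (p+u) \<noteq> \<infinity>" and fin2: "R (i+1) (p+u) \<noteq> \<infinity>"
      using Xu e Suc.prems by (auto simp: plus_eq_infty_iff_enat)
    have pu: "p + u \<le> DD" "1 \<le> u" "u \<le> U i" using u unfolding S_def by auto
    obtain Fo y where fy: "feas (i+1) (real (p+u)) Fo y" "ereal_of_enat (R (i+1) (p+u)) = ereal (rcost (i+1) Fo y)"
      using IH[OF pu(1) fin2] by metis
    have cfin: "\<forall>k\<in>{1..n}. 0 < ovn k p (p+u) \<longrightarrow> c i k \<noteq> \<infinity>"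
      using serve_fin[OF fin1] by blast
    define y' where "y' = y(i := (\<lambda>k. ov k (real p) (real (p+u))))"
    have yy: "\<forall>a\<in>{i+1..m}. y' a = y a" unfolding y'_def by auto
    have iFo: "i \<notin> Fo" using fy(1) unfolding feas_def by auto
    have sumi: "(\<Sum>k\<in>{1..n}. y' i k) = real u"
      using ov_sum[of "real p" "real (p+u)"] pu by (simp add: y'_def)
    have "feas i (real p) (insert i Fo) y'"
      unfolding feas_def
    proof (intro conjI)
      show "insert i Fo \<subseteq> {i..m}" using fy(1) i unfolding feas_def by auto
      show "\<forall>a\<in>{i..m}. \<forall>k\<in>{1..n}. 0 \<le> y' a k"
        using fy(1) unfolding feas_def ins using yy by (auto simp: y'_def ov_nonneg)
      show "\<forall>k\<in>{1..n}. (\<Sum>a\<in>{i..m}. y' a k) = ov k (real p) (real DD)"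
      proof
        fix k assume k: "k \<in> {1..n}"
        have "(\<Sum>a\<in>{i..m}. y' a k) = ov k (real p) (real (p+u)) + (\<Sum>a\<in>{i+1..m}. y a k)"
          unfolding ins using yy by (simp add: y'_def)
        also have "\<dots> = ov k (real p) (real (p+u)) + ov k (real (p+u)) (real DD)"
          using fy(1) k unfolding feas_def by auto
        also have "\<dots> = ov k (real p) (real DD)" using ov_split[of "real p" "real (p+u)" "real DD" k] pu by simp
        finally show "(\<Sum>a\<in>{i..m}. y' a k) = ov k (real p) (real DD)" .
      qed
      show "\<forall>a\<in>{i..m}. (\<Sum>k\<in>{1..n}. y' a k) \<le> real (U a)"
        using fy(1) sumi pu unfolding feas_def ins using yy by auto
      show "\<forall>a\<in>{i..m}. \<forall>k\<in>{1..n}. 0 < y' a k \<longrightarrow> a \<in> insert i Fo \<and> c a k \<noteq> \<infinity>"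
      proof (intro ballI impI)
        fix a k assume a: "a \<in> {i..m}" and k: "k \<in> {1..n}" and pos: "0 < y' a k"
        show "a \<in> insert i Fo \<and> c a k \<noteq> \<infinity>"
        proof (cases "a = i")
          case True
          then have "0 < ov k (real p) (real (p+u))" using pos by (simp add: y'_def)
          then have "0 < ovn k p (p+u)" using ovn_real[of k p "p+u"] by simp
          then show ?thesis using cfin k True by auto
        next
          case False
          then have "a \<in> {i+1..m}" using a by auto
          then show ?thesis using fy(1) k pos yy unfolding feas_def by auto
        qed
      qed
    qed
    moreover have "rcost i (insert i Fo) y' = real (f i) + (\<Sum>k\<in>{1..n}. cr i k * ov k (real p) (real (p+u))) + rcost (i+1) Fo y"
      unfolding rcost_def ins using yy iFo fy(1) unfolding feas_def
      by (simp add: y'_def finite_subset[of Fo "{i+1..m}"])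
    moreover have "ereal_of_enat (R i p) = ereal (real (f i)) + ereal (\<Sum>k\<in>{1..n}. cr i k * ov k (real p) (real (p+u))) + ereal (rcost (i+1) Fo y)"
      using e Xu fy(2) serve_real[OF cfin] by (simp add: ereal_of_enat_add add.assoc)
    ultimately show ?thesis by (metis plus_ereal.simps(1))
  qed
qed

end

context cflp begin

lemma monge_real: assumes "1 \<le> h" "h < i" "i \<le> m" "1 \<le> j" "j < k" "k \<le> n"
  "c h k \<noteq> \<infinity>" "c i j \<noteq> \<infinity>"
  shows "c h j \<noteq> \<infinity> \<and> c i k \<noteq> \<infinity> \<and> cr h j + cr i k \<le> cr h k + cr i j"
proof -
  have M: "c h j + c i k \<le> c h k + c i j" using monge assms by blast
  obtain x1 where x1: "c h k = enat x1" using assms(7) by (cases "c h k") auto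
  obtain x2 where x2: "c i j = enat x2" using assms(8) by (cases "c i j") auto
  have fin: "c h j \<noteq> \<infinity> \<and> c i k \<noteq> \<infinity>" using M x1 x2 by (cases "c h j"; cases "c i k") auto
  then obtain x3 x4 where x3: "c h j = enat x3" and x4: "c i k = enat x4"
    by (cases "c h j"; cases "c i k") auto
  have "x3 + x4 \<le> x1 + x2" using M x1 x2 x3 x4 by simp
  then have "real x3 + real x4 \<le> real x1 + real x2" by linarith
  then show ?thesis using fin x1 x2 x3 x4 by (simp add: cr_def cn_def)
qed

lemma ov_pos_D: "0 < ov k s e \<Longrightarrow> real (Pn (k-1)) < e \<and> s < real (Pn k) \<and> s < e"
  unfolding ov_def by (auto simp: max_def min_def split: if_splits)

lemma ov_lt_D: assumes "e \<le> real DD" "k \<le> n" "ov k s e < ov k s (real DD)" shows "e < real (Pn k)"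
proof (rule ccontr)
  assume "\<not> e < real (Pn k)"
  moreover have "real (Pn k) \<le> real DD" using Pn_mono[OF assms(2)] by simp
  ultimately have "min e (real (Pn k)) = min (real DD) (real (Pn k))" using assms(1) by (simp add: min_def)
  then show False using assms(3) unfolding ov_def by simp
qed

lemma exch:
  assumes i: "i \<in> {1..m}" and s: "0 \<le> s" "s \<le> real DD" and fe: "feas i s Fo y"
    and u: "u = (\<Sum>k\<in>{1..n}. y i k)" "0 < u"
  shows "s + u \<le> real DD \<and> u \<le> real (U i) \<and> i \<in> Fo \<and>
    (\<forall>k\<in>{1..n}. 0 < ov k s (s+u) \<longrightarrow> c i k \<noteq> \<infinity>) \<and>
    (\<exists>y'. feas (i+1) (s+u) (Fo - {i}) y' \<and>
       (\<Sum>k\<in>{1..n}. cr i k * ov k s (s+u)) + (\<Sum>a\<in>{i+1..m}. \<Sum>k\<in>{1..n}. cr a k * y' a k)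
       \<le> (\<Sum>a\<in>{i..m}. \<Sum>k\<in>{1..n}. cr a k * y a k))"
proof -
  define e where "e = s + u"
  define A where "A = {i+1..m}"
  define K where "K = {1..n::nat}"
  have ins: "{i..m} = insert i A" using i unfolding A_def by auto
  have iA: "i \<notin> A" unfolding A_def by auto
  have F: "Fo \<subseteq> {i..m}" "\<forall>a\<in>{i..m}. \<forall>k\<in>K. 0 \<le> y a k"
     "\<forall>k\<in>K. (\<Sum>a\<in>{i..m}. y a k) = ov k s DD"
     "\<forall>a\<in>{i..m}. (\<Sum>k\<in>K. y a k) \<le> real (U a)"
     "\<forall>a\<in>{i..m}. \<forall>k\<in>K. 0 < y a k \<longrightarrow> a \<in> Fo \<and> c a k \<noteq> \<infinity>"
    using fe unfolding feas_def K_def by auto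
  have col: "\<forall>k\<in>K. y i k + (\<Sum>a\<in>A. y a k) = ov k s DD"
    using F(3) unfolding ins using iA by (simp add: A_def)
  have iin: "i \<in> {i..m}" using i by auto
  have yi0: "\<forall>k\<in>K. 0 \<le> y i k" using F(2) iin by blast
  have ya0: "\<forall>a\<in>A. \<forall>k\<in>K. 0 \<le> y a k" using F(2) ins by blast
  have sumA0: "\<forall>k\<in>K. 0 \<le> (\<Sum>a\<in>A. y a k)" using ya0 by (simp add: sum_nonneg)
  have "(\<Sum>k\<in>K. y i k) \<le> (\<Sum>k\<in>K. ov k s DD)"
    using col sumA0 by (intro sum_mono) force
  then have eD: "e \<le> real DD" using ov_sum[of s "real DD"] s u unfolding e_def K_def by simp
  have uU: "u \<le> real (U i)" using F(4) iin u unfolding K_def by blast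
  have se: "s \<le> e" using u unfolding e_def by simp
  have yt0: "\<forall>k\<in>K. 0 \<le> ov k s e" by (simp add: ov_nonneg)
  have bal: "(\<Sum>k\<in>K. ov k s e) = (\<Sum>k\<in>K. y i k)"
    using ov_sum[of s e] s se eD u unfolding e_def K_def by simp
  have ovle: "\<forall>k\<in>K. ov k s e \<le> ov k s DD" using ov_split[OF se eD] ov_nonneg by (metis le_add_same_cancel1)
  have room: "\<forall>k\<in>K. ov k s e - y i k \<le> (\<Sum>a\<in>A. y a k)" using col ovle by force
  have yile: "\<forall>k\<in>K. y i k \<le> ov k s DD" using col sumA0 by force
  have ord: "\<forall>k\<in>K. \<forall>k'\<in>K. y i k < ov k s e \<longrightarrow> ov k' s e < y i k' \<longrightarrow> k < k'"
  proof (intro ballI impI)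
    fix k k' assume k: "k \<in> K" and k': "k' \<in> K" and h1: "y i k < ov k s e" and h2: "ov k' s e < y i k'"
    show "k < k'"
    proof (rule ccontr)
      assume "\<not> k < k'"
      then have "k' \<le> k" by simp
      moreover have "k' \<noteq> k" using h1 h2 by auto
      ultimately have "k' \<le> k - 1" by simp
      then have "real (Pn k') \<le> real (Pn (k-1))" using Pn_mono by simp
      moreover have "real (Pn (k-1)) < e" using ov_pos_D[of k s e] h1 yi0 k by force
      moreover have "e < real (Pn k')" using ov_lt_D[OF eD, of k' s] h2 yile k' unfolding K_def by force
      ultimately show False by simp
    qed
  qed
  have mon: "\<forall>a\<in>A. \<forall>k\<in>K. \<forall>k'\<in>K. k < k' \<longrightarrow> 0 < y a k \<longrightarrow> 0 < y i k' \<longrightarrow>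
                y i k < ov k s e \<longrightarrow> ov k' s e < y i k' \<longrightarrow> cr i k + cr a k' \<le> cr i k' + cr a k"
  proof (intro ballI impI)
    fix a k k' assume a: "a \<in> A" and k: "k \<in> K" and k': "k' \<in> K" and kk: "k < k'"
      and p1: "0 < y a k" and p2: "0 < y i k'"
    have "c a k \<noteq> \<infinity>" using F(5) a k p1 ins by blast
    moreover have "c i k' \<noteq> \<infinity>" using F(5) iin k' p2 by blast
    ultimately show "cr i k + cr a k' \<le> cr i k' + cr a k"
      using monge_real[of i a k k'] i a k k' kk unfolding A_def K_def by auto
  qed
  interpret X: xch A K "y i" "\<lambda>k. ov k s e" "cr i" y cr
  proof unfold_locales
    show "finite A" unfolding A_def by simp
    show "finite K" unfolding K_def by simp
  qed (fact yi0 yt0 ya0 bal room ord mon)+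
  have ex_k': "\<And>k. k \<in> K \<Longrightarrow> y i k < ov k s e \<Longrightarrow> \<exists>k'\<in>K. ov k' s e < y i k'"
  proof (rule ccontr)
    fix k assume k: "k \<in> K" and lt: "y i k < ov k s e" and H: "\<not> (\<exists>k'\<in>K. ov k' s e < y i k')"
    have "(\<Sum>k\<in>K. y i k) < (\<Sum>k\<in>K. ov k s e)"
      using H k lt by (intro sum_strict_mono_ex1) (auto simp: K_def not_less)
    then show False using bal by simp
  qed
  have cfin: "\<forall>k\<in>K. 0 < ov k s e \<longrightarrow> c i k \<noteq> \<infinity>"
  proof (intro ballI impI)
    fix k assume k: "k \<in> K" and pos: "0 < ov k s e"
    show "c i k \<noteq> \<infinity>"
    proof (cases "0 < y i k")
      case True then show ?thesis using F(5) iin k by blast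
    next
      case False
      then have lt: "y i k < ov k s e" using pos yi0 k by force
      then have "0 < (\<Sum>a\<in>A. y a k)" using room k yi0 by force
      then obtain a where a: "a \<in> A" "0 < y a k"
        using sum_pos_lt_pair by (metis less_irrefl sum.neutral le_less ya0 k)
      obtain k' where k': "k' \<in> K" "ov k' s e < y i k'" using ex_k'[OF k lt] by blast
      have kk: "k < k'" using ord k k' lt by blast
      have "c a k \<noteq> \<infinity>" using F(5) a k ins by blast
      moreover have "c i k' \<noteq> \<infinity>" using F(5) iin k' ov_nonneg[of k' s e] by force
      ultimately show ?thesis using monge_real[of i a k k'] i a k k' kk unfolding A_def K_def by auto
    qed
  qed
  have iFo: "i \<in> Fo"
  proof -
    obtain k where "k \<in> K" "0 < y i k" using u yi0 unfolding K_def
      by (metis (no_types, lifting) K_def not_less sum_nonpos)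
    then show ?thesis using F(5) iin by blast
  qed
  have fe2: "feas (i+1) e (Fo - {i}) X.y'"
    unfolding feas_def
  proof (intro conjI)
    show "Fo - {i} \<subseteq> {i + 1..m}" using F(1) by auto
    show "\<forall>a\<in>{i + 1..m}. \<forall>k\<in>{1..n}. 0 \<le> X.y' a k" using X.y'_nonneg unfolding A_def K_def by blast
    show "\<forall>k\<in>{1..n}. (\<Sum>a\<in>{i + 1..m}. X.y' a k) = ov k e (real DD)"
    proof
      fix k assume k: "k \<in> {1..n}"
      have "(\<Sum>a\<in>A. X.y' a k) = X.Rs k - (ov k s e - y i k)" using X.y'_col k unfolding K_def by blast
      also have "\<dots> = ov k s DD - ov k s e" using col k unfolding X.Rs_def K_def by force
      also have "\<dots> = ov k e DD" using ov_split[OF se eD, of k] by simp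
      finally show "(\<Sum>a\<in>{i + 1..m}. X.y' a k) = ov k e (real DD)" unfolding A_def .
    qed
    show "\<forall>a\<in>{i + 1..m}. (\<Sum>k\<in>{1..n}. X.y' a k) \<le> real (U a)"
      using X.y'_row F(4) ins unfolding A_def K_def by auto
    show "\<forall>a\<in>{i + 1..m}. \<forall>k\<in>{1..n}. 0 < X.y' a k \<longrightarrow> a \<in> Fo - {i} \<and> c a k \<noteq> \<infinity>"
    proof (intro ballI impI)
      fix a k assume a: "a \<in> {i+1..m}" and k: "k \<in> {1..n}" and pos: "0 < X.y' a k"
      have aA: "a \<in> A" "a \<noteq> i" using a unfolding A_def by auto
      have kK: "k \<in> K" using k unfolding K_def .
      from X.y'_supp[OF aA(1) kK pos]
      show "a \<in> Fo - {i} \<and> c a k \<noteq> \<infinity>"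
      proof
        assume "0 < y a k" then show ?thesis using F(5) aA kK ins by blast
      next
        assume "ov k s e < y i k \<and> (\<exists>k0\<in>K. y i k0 < ov k0 s e \<and> 0 < y a k0)"
        then obtain k0 where h: "ov k s e < y i k" "k0 \<in> K" "y i k0 < ov k0 s e" "0 < y a k0" by blast
        have kk: "k0 < k" using ord h kK by blast
        have aF: "a \<in> Fo" "c a k0 \<noteq> \<infinity>" using F(5) aA h ins by blast+
        have "c i k \<noteq> \<infinity>" using F(5) iin kK h(1) ov_nonneg[of k s e] by force
        then have "c a k \<noteq> \<infinity>" using monge_real[of i a k0 k] i aA h kK kk aF unfolding A_def K_def by auto
        then show ?thesis using aF aA by blast
      qed
    qed
  qed
  have "(\<Sum>k\<in>K. cr i k * ov k s e) + (\<Sum>a\<in>A. \<Sum>k\<in>K. cr a k * X.y' a k)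
          \<le> (\<Sum>k\<in>K. cr i k * y i k) + (\<Sum>a\<in>A. \<Sum>k\<in>K. cr a k * y a k)" by (rule X.cost)
  also have "\<dots> = (\<Sum>a\<in>{i..m}. \<Sum>k\<in>K. cr a k * y a k)" unfolding ins using iA by (simp add: A_def)
  finally have cst: "(\<Sum>k\<in>K. cr i k * ov k s e) + (\<Sum>a\<in>A. \<Sum>k\<in>K. cr a k * X.y' a k)
          \<le> (\<Sum>a\<in>{i..m}. \<Sum>k\<in>K. cr a k * y a k)" .
  show ?thesis using eD uU iFo cfin fe2 cst unfolding e_def A_def K_def by blast
qed

end

context cflp begin

definition rv :: "enat \<Rightarrow> real" where "rv x = (case x of enat n \<Rightarrow> real n | \<infinity> \<Rightarrow> 0)"
lemma rv: "x \<noteq> \<infinity> \<Longrightarrow> ereal_of_enat x = ereal (rv x)"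
  by (cases x) (auto simp: rv_def)
lemma rv0: "0 \<le> rv x" by (cases x) (auto simp: rv_def)

definition fl :: "real \<Rightarrow> nat" where "fl s = nat \<lfloor>s\<rfloor>"
definition th :: "real \<Rightarrow> real" where "th s = s - real (fl s)"

lemma fl_props: assumes "0 \<le> s" shows "real (fl s) \<le> s" "s < real (fl s) + 1" "0 \<le> th s" "th s < 1"
proof -
  have "real (fl s) = of_int \<lfloor>s\<rfloor>" unfolding fl_def using assms by simp
  then show "real (fl s) \<le> s" "s < real (fl s) + 1" by auto
  then show "0 \<le> th s" "th s < 1" unfolding th_def by auto
qed

lemma fl_mono: "s \<le> e \<Longrightarrow> fl s \<le> fl e"
  unfolding fl_def by (simp add: floor_mono nat_mono)

lemma fl_int[simp]: "fl (real p) = p" "th (real p) = 0"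
  unfolding th_def fl_def by simp_all

definition interp :: "nat \<Rightarrow> real \<Rightarrow> ereal" where
  "interp i s = ereal (1 - th s) * ereal_of_enat (R i (fl s)) + ereal (th s) * ereal_of_enat (R i (fl s + 1))"

lemma interp_int: "interp i (real p) = ereal_of_enat (R i p)"
  unfolding interp_def by (simp add: zero_ereal_def[symmetric])

lemma interp_mono: assumes "i \<in> {1..m}" "0 \<le> s" shows "interp i s \<le> interp (i+1) s"
proof -
  have w: "0 \<le> ereal (1 - th s)" "0 \<le> ereal (th s)" using fl_props[OF assms(2)] by auto
  show ?thesis unfolding interp_def
    by (intro add_mono ereal_mult_left_mono w) (simp_all add: R_le_next[OF assms(1), simplified])
qed

lemma interp_eq: assumes "0 \<le> s" "R i (fl s) \<noteq> \<infinity>" "0 < th s \<longrightarrow> R i (fl s + 1) \<noteq> \<infinity>"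
  shows "interp i s = ereal ((1 - th s) * rv (R i (fl s)) + th s * rv (R i (fl s + 1)))"
proof (cases "th s = 0")
  case True then show ?thesis unfolding interp_def using rv[OF assms(2)] by (simp add: zero_ereal_def[symmetric])
next
  case False
  then have "0 < th s" using fl_props[OF assms(1)] by simp
  then show ?thesis unfolding interp_def using rv[OF assms(2)] rv[of "R i (fl s + 1)"] assms(3) by simp
qed

lemma interp_fin: assumes "0 \<le> s" "interp i s \<le> ereal X"
  shows "R i (fl s) \<noteq> \<infinity>" "0 < th s \<longrightarrow> R i (fl s + 1) \<noteq> \<infinity>"
    "(1 - th s) * rv (R i (fl s)) + th s * rv (R i (fl s + 1)) \<le> X"
proof -
  have t: "0 \<le> th s" "th s < 1" using fl_props[OF assms(1)] by auto
  have nn: "0 \<le> ereal (th s) * ereal_of_enat (R i (fl s + 1))" "0 \<le> ereal (1 - th s) * ereal_of_enat (R i (fl s))"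
    using t by (simp_all add: ereal_of_enat_nonneg)
  show f1: "R i (fl s) \<noteq> \<infinity>"
  proof
    assume "R i (fl s) = \<infinity>"
    then have "interp i s = \<infinity>" unfolding interp_def using t nn(1) by simp
    then show False using assms(2) by simp
  qed
  show f2: "0 < th s \<longrightarrow> R i (fl s + 1) \<noteq> \<infinity>"
  proof (intro impI notI)
    assume "0 < th s" "R i (fl s + 1) = \<infinity>"
    then have "interp i s = \<infinity>" unfolding interp_def using nn(2) by simp
    then show False using assms(2) by simp
  qed
  show "(1 - th s) * rv (R i (fl s)) + th s * rv (R i (fl s + 1)) \<le> X"
    using interp_eq[OF assms(1) f1 f2] assms(2) by simp
qed

definition G :: "nat \<Rightarrow> real \<Rightarrow> real" where "G i z = (\<Sum>k\<in>{1..n}. cr i k * ov k 0 z)"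

lemma G_diff: assumes "0 \<le> a" "a \<le> b" shows "(\<Sum>k\<in>{1..n}. cr i k * ov k a b) = G i b - G i a"
proof -
  have "\<forall>k. ov k 0 b = ov k 0 a + ov k a b" using ov_split[OF assms] by simp
  then show ?thesis unfolding G_def by (simp add: algebra_simps sum.distrib)
qed

lemma ov_aff: assumes "0 \<le> \<theta>" "\<theta> \<le> 1"
  shows "ov k 0 (real t + \<theta>) = (1 - \<theta>) * ov k 0 (real t) + \<theta> * ov k 0 (real t + 1)"
proof -
  have le: "Pn (k-1) \<le> Pn k" using Pn_mono by simp
  have c: "t + 1 \<le> Pn (k-1) \<or> Pn k \<le> t \<or> (Pn (k-1) \<le> t \<and> t + 1 \<le> Pn k)" by linarith
  have o: "\<And>z. 0 \<le> z \<Longrightarrow> ov k 0 z = max 0 (min z (real (Pn k)) - real (Pn (k-1)))"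
    unfolding ov_def by simp
  have z: "0 \<le> real t + \<theta>" "0 \<le> real t" "0 \<le> real t + 1" using assms by auto
  from c show ?thesis
  proof (elim disjE conjE)
    assume h: "t + 1 \<le> Pn (k-1)"
    then have "real t + 1 \<le> real (Pn (k-1))" by linarith
    then show ?thesis unfolding o[OF z(1)] o[OF z(2)] o[OF z(3)] using assms
      by (simp add: max_def min_def)
  next
    assume h: "Pn k \<le> t"
    then have h': "real (Pn k) \<le> real t" by linarith
    have h'': "real (Pn (k-1)) \<le> real (Pn k)" using le by linarith
    have e1: "ov k 0 (real t + \<theta>) = real (Pn k) - real (Pn (k-1))" and e2: "ov k 0 (real t) = real (Pn k) - real (Pn (k-1))"
      and e3: "ov k 0 (real t + 1) = real (Pn k) - real (Pn (k-1))"
      unfolding o[OF z(1)] o[OF z(2)] o[OF z(3)] using assms h' h'' by (simp_all add: max_def min_def)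
    show ?thesis by (simp only: e1 e2 e3) (simp add: algebra_simps)
  next
    assume h1: "Pn (k-1) \<le> t" and h2: "t + 1 \<le> Pn k"
    then have h1': "real (Pn (k-1)) \<le> real t" and h2': "real t + 1 \<le> real (Pn k)" by linarith+
    have e1: "ov k 0 (real t + \<theta>) = real t + \<theta> - real (Pn (k-1))" and e2: "ov k 0 (real t) = real t - real (Pn (k-1))"
      and e3: "ov k 0 (real t + 1) = real t + 1 - real (Pn (k-1))"
      unfolding o[OF z(1)] o[OF z(2)] o[OF z(3)] using assms h1' h2' by (simp_all add: max_def min_def)
    show ?thesis by (simp only: e1 e2 e3) (simp add: algebra_simps)
  qed
qed

lemma G_aff: assumes "0 \<le> \<theta>" "\<theta> \<le> 1"
  shows "G i (real t + \<theta>) = (1 - \<theta>) * G i (real t) + \<theta> * G i (real t + 1)"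
proof -
  have "G i (real t + \<theta>) = (\<Sum>k\<in>{1..n}. (1 - \<theta>) * (cr i k * ov k 0 (real t)) + \<theta> * (cr i k * ov k 0 (real t + 1)))"
    unfolding G_def ov_aff[OF assms] by (rule sum.cong) (simp_all add: algebra_simps)
  also have "\<dots> = (1 - \<theta>) * G i (real t) + \<theta> * G i (real t + 1)"
    unfolding G_def by (simp only: sum.distrib sum_distrib_left)
  finally show ?thesis .
qed

lemma ovn_to_ov: assumes "0 < ovn k a b" "fl s \<le> a" "real b < e + 1" "0 \<le> s" "s < e"
  shows "0 < ov k s e"
proof -
  have h: "Pn (k-1) < b" "a < Pn k" "Pn (k-1) < Pn k" using assms(1) unfolding ovn_def by auto
  have h3: "real (Pn (k-1)) < real (Pn k)" using h(3) by simp
  have "real (Pn (k-1)) < e" using h(1) assms(3) by linarith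
  moreover have "s < real (Pn k)" using h(2) assms(2) fl_props(2)[OF assms(4)] by linarith
  ultimately show ?thesis using assms(5) h3 unfolding ov_def by (auto simp: max_def min_def)
qed

lemma corner: assumes i: "i \<in> {1..m}" and ab: "a \<le> b" "b \<le> DD" "b - a \<le> U i"
  and fl: "fl s \<le> a" "real b < e + 1" "0 \<le> s" "s < e"
  and cf: "\<forall>k\<in>{1..n}. 0 < ov k s e \<longrightarrow> c i k \<noteq> \<infinity>" and fin: "R (i+1) b \<noteq> \<infinity>"
  shows "R i a \<noteq> \<infinity> \<and> rv (R i a) \<le> real (f i) + (G i (real b) - G i (real a)) + rv (R (i+1) b)"
proof (cases "a = b")
  case True
  have "R i a \<le> R (i+1) a" by (rule R_le_next[OF i])
  then have f: "R i a \<noteq> \<infinity>" using fin True by (metis enat_ord_simps(5) top.extremum_uniqueI top_enat_def)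
  have "ereal (rv (R i a)) \<le> ereal (rv (R (i+1) b))" using rv[OF f] rv[OF fin] \<open>R i a \<le> R (i+1) a\<close> True
    by (metis ereal_of_enat_le_iff)
  then show ?thesis using f True by simp
next
  case False
  then have lt: "a < b" using ab by simp
  have le: "R i a \<le> enat (f i) + serve i a b + R (i+1) b" by (rule R_le_step[OF i lt ab(2,3)])
  have cf2: "\<forall>k\<in>{1..n}. 0 < ovn k a b \<longrightarrow> c i k \<noteq> \<infinity>"
    using cf ovn_to_ov[OF _ fl] by blast
  have sv: "ereal_of_enat (serve i a b) = ereal (G i (real b) - G i (real a))"
    using serve_real[OF cf2] G_diff[of "real a" "real b" i] lt by simp
  have "ereal_of_enat (R i a) \<le> ereal (real (f i)) + ereal (G i (real b) - G i (real a)) + ereal (rv (R (i+1) b))"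
    using le sv rv[OF fin] by (metis ereal_of_enat_add ereal_of_enat_le_iff ereal_of_enat_simps(1))
  then have "ereal_of_enat (R i a) \<le> ereal (real (f i) + (G i (real b) - G i (real a)) + rv (R (i+1) b))" by simp
  moreover from this have "R i a \<noteq> \<infinity>"
  proof (intro notI)
    assume "R i a = \<infinity>" "ereal_of_enat (R i a) \<le> ereal (real (f i) + (G i (real b) - G i (real a)) + rv (R (i+1) b))"
    then show False by simp
  qed
  ultimately show ?thesis using rv by fastforce
qed

end

context cflp begin

lemma interpol: assumes i: "i \<in> {1..m}" and se: "0 \<le> s" "s < e" "e \<le> real DD" "e - s \<le> real (U i)"
  and cf: "\<forall>k\<in>{1..n}. 0 < ov k s e \<longrightarrow> c i k \<noteq> \<infinity>" and ip: "interp (i+1) e \<le> ereal X"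
  shows "interp i s \<le> ereal (real (f i) + (G i e - G i s) + X)"
proof -
  define k where "k = fl s"
  define \<theta> where "\<theta> = th s"
  define k' where "k' = fl e"
  define \<theta>' where "\<theta>' = th e"
  have e0: "0 \<le> e" using se by linarith
  have sk: "s = real k + \<theta>" unfolding k_def \<theta>_def th_def by simp
  have ek: "e = real k' + \<theta>'" unfolding k'_def \<theta>'_def th_def by simp
  have t: "0 \<le> \<theta>" "\<theta> < 1" "0 \<le> \<theta>'" "\<theta>' < 1"
    using fl_props[OF se(1)] fl_props[OF e0] unfolding \<theta>_def \<theta>'_def by auto
  have kk: "k \<le> k'" unfolding k_def k'_def using se by (simp add: fl_mono)
  define r0 where "r0 = rv (R (i+1) k')"
  define r1 where "r1 = rv (R (i+1) (k'+1))"
  define q0 where "q0 = rv (R i k)"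
  define q1 where "q1 = rv (R i (k+1))"
  note IF = interp_fin[OF e0 ip]
  have f0: "R (i+1) k' \<noteq> \<infinity>" using IF(1) unfolding k'_def .
  have f1: "0 < \<theta>' \<Longrightarrow> R (i+1) (k'+1) \<noteq> \<infinity>" using IF(2) unfolding k'_def \<theta>'_def by simp
  have rx: "(1 - \<theta>') * r0 + \<theta>' * r1 \<le> X" using IF(3) unfolding r0_def r1_def k'_def \<theta>'_def .
  have Gs: "G i s = (1 - \<theta>) * G i (real k) + \<theta> * G i (real k + 1)" using G_aff[of \<theta> i k] t sk by simp
  have Ge: "G i e = (1 - \<theta>') * G i (real k') + \<theta>' * G i (real k' + 1)" using G_aff[of \<theta>' i k'] t ek by simp
  have k'D: "k' \<le> DD" using ek t se(3) by linarith
  have k'1D: "0 < \<theta>' \<Longrightarrow> k' + 1 \<le> DD"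
  proof -
    assume "0 < \<theta>'"
    have "real k' < real DD" using ek \<open>0 < \<theta>'\<close> se(3) by linarith
    then show "k' + 1 \<le> DD" by linarith
  qed
  have len1: "k' - k \<le> U i"
  proof -
    have "real k' < real k + real (U i) + 1" using sk ek t se(4) by linarith
    then show ?thesis by linarith
  qed
  have flk: "fl s \<le> k" "fl s \<le> k + 1" unfolding k_def by auto
  have b1: "real k' < e + 1" using ek t by linarith
  have b2: "0 < \<theta>' \<Longrightarrow> real (k'+1) < e + 1" using ek t by simp
  note C = corner[OF i _ _ _ _ _ se(1) se(2) cf]
  have c1: "R i k \<noteq> \<infinity> \<and> q0 \<le> real (f i) + (G i (real k') - G i (real k)) + r0"
    using C[OF kk k'D _ flk(1) b1 f0] len1 unfolding q0_def r0_def by simp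
  have w1: "0 \<le> 1 - \<theta>" "0 \<le> 1 - \<theta>'" using t by auto
  have fin_all: "R i k \<noteq> \<infinity> \<and> (0 < \<theta> \<longrightarrow> R i (k+1) \<noteq> \<infinity>) \<and>
      (1 - \<theta>) * q0 + \<theta> * q1 \<le> real (f i) + (G i e - G i s) + X"
  proof (cases "\<theta>' \<le> \<theta>")
    case True
    have c2: "0 < \<theta>' \<Longrightarrow> R i (k+1) \<noteq> \<infinity> \<and> q1 \<le> real (f i) + (G i (real k' + 1) - G i (real k + 1)) + r1"
    proof -
      assume p: "0 < \<theta>'"
      have "k + 1 \<le> k' + 1" "(k' + 1) - (k + 1) \<le> U i" using kk len1 by auto
      then show ?thesis using C[OF _ k'1D[OF p] _ flk(2) b2[OF p] f1[OF p]] p unfolding q1_def r1_def by (simp add: add.commute)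
    qed
    have c3: "\<theta>' < \<theta> \<Longrightarrow> R i (k+1) \<noteq> \<infinity> \<and> q1 \<le> real (f i) + (G i (real k') - G i (real k + 1)) + r0"
    proof -
      assume p: "\<theta>' < \<theta>"
      have "real k < real k'" using sk ek se(2) p by linarith
      then have "k + 1 \<le> k'" by linarith
      moreover have "k' - (k + 1) \<le> U i" using len1 by auto
      ultimately show ?thesis using C[OF _ k'D _ flk(2) b1 f0] unfolding q1_def r0_def by (simp add: add.commute)
    qed
    have h1: "(1 - \<theta>) * q0 \<le> (1 - \<theta>) * (real (f i) + (G i (real k') - G i (real k)) + r0)"
      using c1 w1 by (simp add: mult_left_mono)
    have h2: "\<theta>' * q1 \<le> \<theta>' * (real (f i) + (G i (real k' + 1) - G i (real k + 1)) + r1)"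
    proof (cases "0 < \<theta>'")
      case True then show ?thesis using c2 by (simp add: mult_left_mono)
    next
      case False then have "\<theta>' = 0" using t by simp
      then show ?thesis by simp
    qed
    have h3: "(\<theta> - \<theta>') * q1 \<le> (\<theta> - \<theta>') * (real (f i) + (G i (real k') - G i (real k + 1)) + r0)"
    proof (cases "\<theta>' < \<theta>")
      case True then show ?thesis using c3 by (simp add: mult_left_mono)
    next
      case False then have "\<theta> - \<theta>' = 0" using \<open>\<theta>' \<le> \<theta>\<close> by simp
      then show ?thesis by simp
    qed
    have "(1 - \<theta>) * q0 + \<theta> * q1 = (1 - \<theta>) * q0 + \<theta>' * q1 + (\<theta> - \<theta>') * q1" by (simp add: algebra_simps)
    also have "\<dots> \<le> (1 - \<theta>) * (real (f i) + (G i (real k') - G i (real k)) + r0)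
       + \<theta>' * (real (f i) + (G i (real k' + 1) - G i (real k + 1)) + r1)
       + (\<theta> - \<theta>') * (real (f i) + (G i (real k') - G i (real k + 1)) + r0)"
      using h1 h2 h3 by linarith
    also have "\<dots> = real (f i) + (((1 - \<theta>') * G i (real k') + \<theta>' * G i (real k' + 1))
        - ((1 - \<theta>) * G i (real k) + \<theta> * G i (real k + 1))) + ((1 - \<theta>') * r0 + \<theta>' * r1)"
      by (simp add: algebra_simps)
    finally have "(1 - \<theta>) * q0 + \<theta> * q1 \<le> real (f i) + (G i e - G i s) + X"
      using Gs Ge rx by linarith
    moreover have "0 < \<theta> \<longrightarrow> R i (k+1) \<noteq> \<infinity>"
      using c2 c3 True by (cases "0 < \<theta>'") auto
    ultimately show ?thesis using c1 by blast
  next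
    case False
    then have p: "\<theta> < \<theta>'" by simp
    have tp: "0 < \<theta>'" using p t by linarith
    have len3: "(k' + 1) - k \<le> U i"
    proof -
      have "real k' < real k + real (U i)" using sk ek t se(4) p by linarith
      then show ?thesis by linarith
    qed
    have c2: "0 < \<theta> \<Longrightarrow> R i (k+1) \<noteq> \<infinity> \<and> q1 \<le> real (f i) + (G i (real k' + 1) - G i (real k + 1)) + r1"
    proof -
      assume "0 < \<theta>"
      have "k + 1 \<le> k' + 1" "(k' + 1) - (k + 1) \<le> U i" using kk len1 by auto
      then show ?thesis using C[OF _ k'1D[OF tp] _ flk(2) b2[OF tp] f1[OF tp]] unfolding q1_def r1_def by (simp add: add.commute)
    qed
    have c3: "q0 \<le> real (f i) + (G i (real k' + 1) - G i (real k)) + r1"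
    proof -
      have "k \<le> k' + 1" using kk by simp
      then show ?thesis using C[OF _ k'1D[OF tp] len3 flk(1) b2[OF tp] f1[OF tp]] unfolding q0_def r1_def by (simp add: add.commute)
    qed
    have h1: "(1 - \<theta>') * q0 \<le> (1 - \<theta>') * (real (f i) + (G i (real k') - G i (real k)) + r0)"
      using c1 w1 by (simp add: mult_left_mono)
    have h2: "\<theta> * q1 \<le> \<theta> * (real (f i) + (G i (real k' + 1) - G i (real k + 1)) + r1)"
    proof (cases "0 < \<theta>")
      case True then show ?thesis using c2 by (simp add: mult_left_mono)
    next
      case False then have "\<theta> = 0" using t by simp
      then show ?thesis by simp
    qed
    have h3: "(\<theta>' - \<theta>) * q0 \<le> (\<theta>' - \<theta>) * (real (f i) + (G i (real k' + 1) - G i (real k)) + r1)"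
      using c3 p by (simp add: mult_left_mono)
    have "(1 - \<theta>) * q0 + \<theta> * q1 = (1 - \<theta>') * q0 + \<theta> * q1 + (\<theta>' - \<theta>) * q0" by (simp add: algebra_simps)
    also have "\<dots> \<le> (1 - \<theta>') * (real (f i) + (G i (real k') - G i (real k)) + r0)
       + \<theta> * (real (f i) + (G i (real k' + 1) - G i (real k + 1)) + r1)
       + (\<theta>' - \<theta>) * (real (f i) + (G i (real k' + 1) - G i (real k)) + r1)"
      using h1 h2 h3 by linarith
    also have "\<dots> = real (f i) + (((1 - \<theta>') * G i (real k') + \<theta>' * G i (real k' + 1))
        - ((1 - \<theta>) * G i (real k) + \<theta> * G i (real k + 1))) + ((1 - \<theta>') * r0 + \<theta>' * r1)"
      by (simp add: algebra_simps)
    finally have "(1 - \<theta>) * q0 + \<theta> * q1 \<le> real (f i) + (G i e - G i s) + X"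
      using Gs Ge rx by linarith
    moreover have "0 < \<theta> \<longrightarrow> R i (k+1) \<noteq> \<infinity>" using c2 by blast
    ultimately show ?thesis using c1 by blast
  qed
  have "interp i s = ereal ((1 - \<theta>) * q0 + \<theta> * q1)"
    using interp_eq[OF se(1)] fin_all unfolding k_def \<theta>_def q0_def q1_def by simp
  then show ?thesis using fin_all by simp
qed

end

context cflp begin

lemma partB: "i \<in> {1..m+1} \<Longrightarrow> 0 \<le> s \<Longrightarrow> s \<le> real DD \<Longrightarrow> feas i s Fo y \<Longrightarrow>
    interp i s \<le> ereal (rcost i Fo y)"
proof (induction "m + 1 - i" arbitrary: i s Fo y)
  case 0
  then have i: "i = m + 1" by auto
  have "\<forall>k\<in>{1..n}. ov k s (real DD) = 0" using "0.prems"(4) i unfolding feas_def by auto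
  then have "real DD - s = 0" using ov_sum[of s "real DD"] "0.prems" by simp
  then have sD: "s = real DD" by simp
  have "Fo = {}" using "0.prems"(4) i unfolding feas_def by auto
  then have "rcost i Fo y = 0" unfolding rcost_def using i by simp
  moreover have "interp i s = 0" using interp_int[of i DD] sD R_end[of i] i by simp
  ultimately show ?case by simp
next
  case (Suc t)
  then have i: "i \<in> {1..m}" by auto
  have IH: "\<And>s' Fo' y'. 0 \<le> s' \<Longrightarrow> s' \<le> real DD \<Longrightarrow> feas (i+1) s' Fo' y' \<Longrightarrow>
      interp (i+1) s' \<le> ereal (rcost (i+1) Fo' y')"
    using Suc i by auto
  have ins: "{i..m} = insert i {i+1..m}" using i by auto
  have fe: "feas i s Fo y" by fact
  have Ffin: "finite Fo" using fe unfolding feas_def by (auto intro: finite_subset)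
  define u where "u = (\<Sum>k\<in>{1..n}. y i k)"
  have y0: "\<forall>k\<in>{1..n}. 0 \<le> y i k" using fe i unfolding feas_def by auto
  have u0: "0 \<le> u" unfolding u_def by (intro sum_nonneg) (use y0 in auto)
  have fsum: "(\<Sum>a\<in>Fo. real (f a)) \<ge> (\<Sum>a\<in>Fo - {i}. real (f a))"
    by (rule sum_mono2) (use Ffin in auto)
  show ?case
  proof (cases "u = 0")
    case True
    then have z: "\<forall>k\<in>{1..n}. y i k = 0" using y0 sum_nonneg_eq_0_iff[of "{1..n}" "y i"] unfolding u_def by fastforce
    have fe2: "feas (i+1) s (Fo - {i}) y"
      using fe z unfolding feas_def ins by auto
    have "rcost i Fo y = (\<Sum>a\<in>Fo. real (f a)) + (\<Sum>a\<in>{i+1..m}. \<Sum>k\<in>{1..n}. cr a k * y a k)"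
      unfolding rcost_def ins using z by simp
    then have "rcost (i+1) (Fo - {i}) y \<le> rcost i Fo y" using fsum unfolding rcost_def by simp
    moreover have "interp i s \<le> interp (i+1) s" by (rule interp_mono[OF i Suc.prems(2)])
    ultimately show ?thesis using IH[OF Suc.prems(2,3) fe2] by (meson ereal_less_eq(3) order_trans)
  next
    case False
    then have up: "0 < u" using u0 by simp
    note EX = exch[OF i Suc.prems(2,3) fe u_def up]
    then obtain y' where fe2: "feas (i+1) (s+u) (Fo - {i}) y'" and
      cst: "(\<Sum>k\<in>{1..n}. cr i k * ov k s (s+u)) + (\<Sum>a\<in>{i+1..m}. \<Sum>k\<in>{1..n}. cr a k * y' a k)
       \<le> (\<Sum>a\<in>{i..m}. \<Sum>k\<in>{1..n}. cr a k * y a k)" by blast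
    have eD: "s + u \<le> real DD" and uU: "u \<le> real (U i)" and iF: "i \<in> Fo"
      and cf: "\<forall>k\<in>{1..n}. 0 < ov k s (s+u) \<longrightarrow> c i k \<noteq> \<infinity>" using EX by auto
    have ih: "interp (i+1) (s+u) \<le> ereal (rcost (i+1) (Fo - {i}) y')"
      using IH[OF _ eD fe2] Suc.prems(2) u0 by simp
    have I1: "interp i s \<le> ereal (real (f i) + (G i (s+u) - G i s) + rcost (i+1) (Fo - {i}) y')"
      by (rule interpol[OF i Suc.prems(2) _ eD _ cf ih]) (use up uU in auto)
    have "G i (s+u) - G i s = (\<Sum>k\<in>{1..n}. cr i k * ov k s (s+u))"
      using G_diff[of s "s+u" i] Suc.prems(2) u0 by simp
    moreover have "(\<Sum>a\<in>Fo. real (f a)) = real (f i) + (\<Sum>a\<in>Fo - {i}. real (f a))"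
      using Ffin iF by (simp add: sum.remove)
    ultimately have "real (f i) + (G i (s+u) - G i s) + rcost (i+1) (Fo - {i}) y' \<le> rcost i Fo y"
      using cst unfolding rcost_def by simp
    then show ?thesis using I1 by (meson ereal_less_eq(3) order_trans)
  qed
qed

lemma term_eq: assumes "0 \<le> v" "0 < v \<longrightarrow> c a k \<noteq> \<infinity>"
  shows "ereal_of_enat (c a k) * ereal v = ereal (cr a k * v)"
proof (cases "c a k")
  case (enat x) then show ?thesis by (simp add: cr_def cn_def)
next
  case infinity then have "v = 0" using assms by auto
  then show ?thesis by (simp add: zero_ereal_def[symmetric])
qed

lemma ovD: assumes j: "j \<in> {1..n}" and d: "d \<le> dem j" and k: "k \<in> {1..n}"
  shows "ov k (real (Pn j - d)) (real DD) =
     (if k \<in> sub_clients n j d then real (sub_dem dem j d k) else 0)"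
proof -
  have pj: "Pn j = Pn (j-1) + dem j" using Pn_diff j by simp
  have jD: "Pn j \<le> DD" using Pn_mono j by simp
  have kD: "Pn k \<le> DD" using Pn_mono k by simp
  have pk: "Pn k = Pn (k-1) + dem k" using Pn_diff k by simp
  consider "k < j" | "k = j" | "j < k" by linarith
  then show ?thesis
  proof cases
    case 1
    then have "Pn k \<le> Pn (j-1)" using Pn_mono by simp
    then have "real (Pn k) \<le> real (Pn j - d)" using pj d by linarith
    then show ?thesis using 1 unfolding ov_def sub_clients_def by (auto simp: max_def min_def)
  next
    case 2
    have "Pn (k-1) \<le> Pn j - d" using 2 pj d by simp
    then have "real (Pn (k-1)) \<le> real (Pn j - d)" by linarith
    moreover have "real (Pn j - d) = real (Pn k) - real d" using 2 pj d by (simp add: of_nat_diff)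
    ultimately show ?thesis using 2 kD k unfolding ov_def sub_clients_def sub_dem_def
      by (auto simp: max_def min_def)
  next
    case 3
    then have "Pn j \<le> Pn (k-1)" using Pn_mono by simp
    then have "real (Pn j - d) \<le> real (Pn (k-1))" by linarith
    moreover have "real (Pn k) = real (Pn (k-1)) + real (dem k)" using pk by simp
    ultimately show ?thesis using 3 kD k unfolding ov_def sub_clients_def sub_dem_def
      by (auto simp: max_def min_def)
  qed
qed

lemma sub_pos: assumes "j \<in> {1..n}" "k \<in> sub_clients n j d" shows "0 < sub_dem dem j d k"
  using assms dem_pos unfolding sub_clients_def sub_dem_def by auto

lemma sub_cl: "sub_clients n j d \<subseteq> {1..n}" if "j \<in> {1..n}"
  using that unfolding sub_clients_def by auto

end

context cflp begin

lemma sub_opt_eq: assumes i: "i \<in> {1..m}" and j: "j \<in> {1..n}" and d: "d \<le> dem j"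
  shows "sub_opt m n dem f U c i j d = ereal_of_enat (R i (Pn j - d))"
proof -
  define cl where "cl = sub_clients n j d"
  define dm' where "dm' = sub_dem dem j d"
  define p where "p = Pn j - d"
  define S where "S = {cfl_cost {i..m} cl dm' f c Fo x | Fo x. cfl_feasible {i..m} cl dm' U Fo x}"
  have pD: "p \<le> DD" unfolding p_def using Pn_mono[of j n] j by simp
  have clsub: "cl \<subseteq> {1..n}" unfolding cl_def using sub_cl[OF j] .
  have finc: "finite cl" using clsub by (auto intro: finite_subset)
  have dpos: "\<And>k. k \<in> cl \<Longrightarrow> 0 < dm' k" unfolding cl_def dm'_def using sub_pos[OF j] by blast
  have ovc: "\<And>k. k \<in> {1..n} \<Longrightarrow> ov k (real p) (real DD) = (if k \<in> cl then real (dm' k) else 0)"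
    unfolding p_def cl_def dm'_def using ovD[OF j d] by blast
  have i1: "i \<in> {1..m+1}" using i by auto
  have lower: "ereal_of_enat (R i p) \<le> z" if "z \<in> S" for z
  proof -
    obtain Fo x where z: "z = cfl_cost {i..m} cl dm' f c Fo x" and fx: "cfl_feasible {i..m} cl dm' U Fo x"
      using \<open>z \<in> S\<close> unfolding S_def by blast
    have F: "Fo \<subseteq> {i..m}" "\<forall>a\<in>{i..m}. \<forall>k\<in>cl. 0 \<le> x a k \<and> x a k \<le> 1"
      "\<forall>k\<in>cl. (\<Sum>a\<in>{i..m}. x a k) = 1" "\<forall>a\<in>{i..m}. (\<Sum>k\<in>cl. x a k * real (dm' k)) \<le> real (U a)"
      "\<forall>a\<in>{i..m}. \<forall>k\<in>cl. 0 < x a k \<longrightarrow> a \<in> Fo"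
      using fx unfolding cfl_feasible_def by auto
    show ?thesis
    proof (cases "z = \<infinity>")
      case True then show ?thesis by simp
    next
      case False
      define T where "T a k = ereal_of_enat (c a k) * ereal (real (dm' k) * x a k)" for a k
      have zz: "z = ereal (\<Sum>a\<in>Fo. real (f a)) + (\<Sum>a\<in>{i..m}. \<Sum>k\<in>cl. T a k)"
        unfolding z cfl_cost_def T_def by simp
      have "(\<Sum>a\<in>{i..m}. \<Sum>k\<in>cl. T a k) \<noteq> \<infinity>" using False zz by auto
      then have Tf: "\<forall>a\<in>{i..m}. \<forall>k\<in>cl. T a k \<noteq> \<infinity>" by (auto simp: sum_Pinfty finc)
      have cf: "\<forall>a\<in>{i..m}. \<forall>k\<in>cl. 0 < x a k \<longrightarrow> c a k \<noteq> \<infinity>"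
      proof (intro ballI impI notI)
        fix a k assume a: "a \<in> {i..m}" and k: "k \<in> cl" and pos: "0 < x a k" and inf: "c a k = \<infinity>"
        have "0 < real (dm' k) * x a k" using dpos[OF k] pos by simp
        then have "T a k = \<infinity>" unfolding T_def using inf dpos[OF k] pos by simp
        then show False using Tf a k by blast
      qed
      define y where "y a k = (if k \<in> cl then x a k * real (dm' k) else 0)" for a k
      have fe: "feas i (real p) Fo y" unfolding feas_def
      proof (intro conjI)
        show "Fo \<subseteq> {i..m}" by (fact F(1))
        show "\<forall>a\<in>{i..m}. \<forall>k\<in>{1..n}. 0 \<le> y a k" using F(2) unfolding y_def by auto
        show "\<forall>k\<in>{1..n}. (\<Sum>a\<in>{i..m}. y a k) = ov k (real p) (real DD)"
        proof
          fix k assume k: "k \<in> {1..n}"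
          show "(\<Sum>a\<in>{i..m}. y a k) = ov k (real p) (real DD)"
          proof (cases "k \<in> cl")
            case True
            have "(\<Sum>a\<in>{i..m}. y a k) = (\<Sum>a\<in>{i..m}. x a k) * real (dm' k)"
              unfolding y_def using True by (simp add: sum_distrib_right)
            then show ?thesis using F(3) True ovc[OF k] by simp
          next
            case False then show ?thesis using ovc[OF k] unfolding y_def by simp
          qed
        qed
        show "\<forall>a\<in>{i..m}. (\<Sum>k\<in>{1..n}. y a k) \<le> real (U a)"
        proof
          fix a assume a: "a \<in> {i..m}"
          have "(\<Sum>k\<in>{1..n}. y a k) = (\<Sum>k\<in>cl. y a k)"
            by (rule sum.mono_neutral_right) (use clsub in \<open>auto simp: y_def\<close>)
          also have "\<dots> = (\<Sum>k\<in>cl. x a k * real (dm' k))" unfolding y_def by simp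
          finally show "(\<Sum>k\<in>{1..n}. y a k) \<le> real (U a)" using F(4) a by simp
        qed
        show "\<forall>a\<in>{i..m}. \<forall>k\<in>{1..n}. 0 < y a k \<longrightarrow> a \<in> Fo \<and> c a k \<noteq> \<infinity>"
        proof (intro ballI impI)
          fix a k assume a: "a \<in> {i..m}" and k: "k \<in> {1..n}" and pos: "0 < y a k"
          have kc: "k \<in> cl" using pos unfolding y_def by (auto split: if_splits)
          have "0 < x a k" using pos kc F(2) a unfolding y_def by (auto simp: zero_less_mult_iff)
          then show "a \<in> Fo \<and> c a k \<noteq> \<infinity>" using F(5) cf a kc by blast
        qed
      qed
      have "(\<Sum>a\<in>{i..m}. \<Sum>k\<in>cl. T a k) = (\<Sum>a\<in>{i..m}. \<Sum>k\<in>cl. ereal (cr a k * y a k))"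
      proof (intro sum.cong refl)
        fix a k assume a: "a \<in> {i..m}" and k: "k \<in> cl"
        have "T a k = ereal (cr a k * (real (dm' k) * x a k))" unfolding T_def
          by (rule term_eq) (use F(2) a k cf dpos[OF k] in \<open>auto simp: zero_less_mult_iff\<close>)
        then show "T a k = ereal (cr a k * y a k)" using k unfolding y_def by (simp add: ac_simps)
      qed
      also have "\<dots> = ereal (\<Sum>a\<in>{i..m}. \<Sum>k\<in>{1..n}. cr a k * y a k)"
      proof -
        have "\<forall>a. (\<Sum>k\<in>{1..n}. cr a k * y a k) = (\<Sum>k\<in>cl. cr a k * y a k)"
          by (intro allI sum.mono_neutral_right) (use clsub in \<open>auto simp: y_def\<close>)
        then show ?thesis by simp
      qed
      finally have "z = ereal (rcost i Fo y)" using zz unfolding rcost_def by simp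
      moreover have "interp i (real p) \<le> ereal (rcost i Fo y)"
        by (rule partB[OF i1 _ _ fe]) (use pD in auto)
      ultimately show ?thesis using interp_int by simp
    qed
  qed
  have upper: "Inf S \<le> ereal_of_enat (R i p)"
  proof (cases "R i p = \<infinity>")
    case True then show ?thesis by simp
  next
    case False
    obtain Fo y where fe: "feas i (real p) Fo y" and Ry: "ereal_of_enat (R i p) = ereal (rcost i Fo y)"
      using partA[OF i1 pD False] by blast
    have F: "Fo \<subseteq> {i..m}" "\<forall>a\<in>{i..m}. \<forall>k\<in>{1..n}. 0 \<le> y a k"
      "\<forall>k\<in>{1..n}. (\<Sum>a\<in>{i..m}. y a k) = ov k (real p) (real DD)"
      "\<forall>a\<in>{i..m}. (\<Sum>k\<in>{1..n}. y a k) \<le> real (U a)"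
      "\<forall>a\<in>{i..m}. \<forall>k\<in>{1..n}. 0 < y a k \<longrightarrow> a \<in> Fo \<and> c a k \<noteq> \<infinity>"
      using fe unfolding feas_def by auto
    have zero_out: "\<forall>a\<in>{i..m}. \<forall>k\<in>{1..n}. k \<notin> cl \<longrightarrow> y a k = 0"
    proof (intro ballI impI)
      fix a k assume a: "a \<in> {i..m}" and k: "k \<in> {1..n}" and nk: "k \<notin> cl"
      have "(\<Sum>a\<in>{i..m}. y a k) = 0" using F(3) ovc[OF k] nk k by simp
      then show "y a k = 0" using sum_nonneg_eq_0_iff[of "{i..m}" "\<lambda>a. y a k"] F(2) a k by auto
    qed
    have yle: "\<forall>a\<in>{i..m}. \<forall>k\<in>cl. y a k \<le> real (dm' k)"
    proof (intro ballI)
      fix a k assume a: "a \<in> {i..m}" and k: "k \<in> cl"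
      have k1: "k \<in> {1..n}" using k clsub by auto
      have "y a k \<le> (\<Sum>a\<in>{i..m}. y a k)"
        by (rule member_le_sum) (use a F(2) k1 in auto)
      then show "y a k \<le> real (dm' k)" using F(3) ovc[OF k1] k k1 by simp
    qed
    define x where "x a k = y a k / real (dm' k)" for a k
    have fx: "cfl_feasible {i..m} cl dm' U Fo x" unfolding cfl_feasible_def
    proof (intro conjI)
      show "Fo \<subseteq> {i..m}" by (fact F(1))
      show "\<forall>a\<in>{i..m}. \<forall>k\<in>cl. 0 \<le> x a k \<and> x a k \<le> 1"
        using F(2) yle dpos clsub unfolding x_def by (auto simp: divide_le_eq_1)
      show "\<forall>k\<in>cl. (\<Sum>a\<in>{i..m}. x a k) = 1"
      proof
        fix k assume k: "k \<in> cl"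
        have k1: "k \<in> {1..n}" using k clsub by auto
        have "(\<Sum>a\<in>{i..m}. x a k) = (\<Sum>a\<in>{i..m}. y a k) / real (dm' k)"
          unfolding x_def by (simp add: sum_divide_distrib)
        moreover have "(\<Sum>a\<in>{i..m}. y a k) = real (dm' k)" using F(3) ovc[OF k1] k k1 by simp
        ultimately show "(\<Sum>a\<in>{i..m}. x a k) = 1" using dpos[OF k] by simp
      qed
      show "\<forall>a\<in>{i..m}. (\<Sum>k\<in>cl. x a k * real (dm' k)) \<le> real (U a)"
      proof
        fix a assume a: "a \<in> {i..m}"
        have "(\<Sum>k\<in>cl. x a k * real (dm' k)) = (\<Sum>k\<in>cl. y a k)"
          unfolding x_def using dpos by (intro sum.cong) auto
        also have "\<dots> \<le> (\<Sum>k\<in>{1..n}. y a k)"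
          by (rule sum_mono2) (use clsub F(2) a in auto)
        finally show "(\<Sum>k\<in>cl. x a k * real (dm' k)) \<le> real (U a)" using F(4) a by (meson order_trans)
      qed
      show "\<forall>a\<in>{i..m}. \<forall>k\<in>cl. 0 < x a k \<longrightarrow> a \<in> Fo"
        using F(5) dpos clsub unfolding x_def by (auto simp: zero_less_divide_iff)
    qed
    have "cfl_cost {i..m} cl dm' f c Fo x = ereal (rcost i Fo y)"
    proof -
      have "(\<Sum>a\<in>{i..m}. \<Sum>k\<in>cl. ereal_of_enat (c a k) * ereal (real (dm' k) * x a k))
          = (\<Sum>a\<in>{i..m}. \<Sum>k\<in>cl. ereal (cr a k * y a k))"
      proof (intro sum.cong refl)
        fix a k assume a: "a \<in> {i..m}" and k: "k \<in> cl"
        have k1: "k \<in> {1..n}" using k clsub by auto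
        have "real (dm' k) * x a k = y a k" unfolding x_def using dpos[OF k] by simp
        then show "ereal_of_enat (c a k) * ereal (real (dm' k) * x a k) = ereal (cr a k * y a k)"
          using term_eq[of "y a k" a k] F(2) F(5) a k1 by simp
      qed
      also have "\<dots> = ereal (\<Sum>a\<in>{i..m}. \<Sum>k\<in>{1..n}. cr a k * y a k)"
      proof -
        have "\<forall>a\<in>{i..m}. (\<Sum>k\<in>{1..n}. cr a k * y a k) = (\<Sum>k\<in>cl. cr a k * y a k)"
          by (intro ballI sum.mono_neutral_right) (use clsub zero_out in auto)
        then show ?thesis by simp
      qed
      finally show ?thesis unfolding cfl_cost_def rcost_def by simp
    qed
    then have "ereal (rcost i Fo y) \<in> S" unfolding S_def using fx by (metis (mono_tags, lifting) mem_Collect_eq)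
    then show ?thesis using Ry by (simp add: Inf_lower)
  qed
  have "Inf S = ereal_of_enat (R i p)"
  proof (rule antisym)
    show "Inf S \<le> ereal_of_enat (R i p)" by (fact upper)
    show "ereal_of_enat (R i p) \<le> Inf S" using lower by (rule Inf_greatest)
  qed
  then show ?thesis unfolding sub_opt_def cfl_opt_def S_def cl_def dm'_def p_def by simp
qed

end

context cflp begin

lemma Pn_split: "j \<le> l \<Longrightarrow> Pn l = Pn j + (\<Sum>k\<in>{Suc j..l}. dem k)"
proof (induction l rule: dec_induct)
  case base then show ?case by simp
next
  case (step l) then show ?case by (simp add: sum.cl_ivl_Suc)
qed

context
  fixes j d u :: nat
  assumes j: "j \<in> {1..n}" and d: "d \<le> dem j" and u: "1 \<le> u" "u \<le> DD - (Pn j - d)"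
begin

definition "pp = Pn j - d"
definition "ee = pp + u"
definition "ll = NC n dem u j d"

lemma pj: "Pn j = Pn (j-1) + dem j" using Pn_diff j by simp
lemma pp_ge: "Pn (j-1) \<le> pp" and pp_le: "pp \<le> Pn j" and dpp: "d = Pn j - pp"
  unfolding pp_def using pj d by auto
lemma jD: "Pn j \<le> DD" using Pn_mono j by simp
lemma eeD: "ee \<le> DD" and pe: "pp < ee" unfolding ee_def using u jD pp_def by auto

lemma sum_eq: "j \<le> l \<Longrightarrow> d + (\<Sum>k\<in>{Suc j..l}. dem k) = Pn l - pp"
  using Pn_split[of j l] dpp pp_le by simp

definition "Q l = (j \<le> l \<and> (n < l \<or> u < d + (\<Sum>k\<in>{Suc j..l}. dem k)))"

lemma Q_iff: "j \<le> l \<Longrightarrow> l \<le> n \<Longrightarrow> Q l \<longleftrightarrow> ee < Pn l"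
proof -
  assume a: "j \<le> l" "l \<le> n"
  have "Pn j \<le> Pn l" using Pn_mono a by simp
  then show ?thesis unfolding Q_def using sum_eq[OF a(1)] a pp_le unfolding ee_def by auto
qed

lemma ll_def2: "ll = (LEAST l. Q l)" unfolding ll_def NC_def Q_def by simp

lemma ll_Q: "Q ll" and ll_min: "Q l \<Longrightarrow> ll \<le> l"
proof -
  have "Q (n+1)" unfolding Q_def using j by auto
  then show "Q ll" unfolding ll_def2 by (rule LeastI)
  show "Q l \<Longrightarrow> ll \<le> l" unfolding ll_def2 by (rule Least_le)
qed

lemma ll_ge: "j \<le> ll" using ll_Q unfolding Q_def by simp
lemma ll_le: "ll \<le> n + 1" using ll_min[of "n+1"] j unfolding Q_def by auto

lemma ll_in: assumes "ll \<le> n" shows "ee < Pn ll" "Pn (ll-1) \<le> ee"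
proof -
  show "ee < Pn ll" using Q_iff[OF ll_ge assms] ll_Q by simp
  show "Pn (ll-1) \<le> ee"
  proof (cases "ll = j")
    case True then show ?thesis using pp_ge pe by simp
  next
    case False
    then have "j \<le> ll - 1" "ll - 1 \<le> n" using ll_ge assms by auto
    moreover have "\<not> Q (ll - 1)" using ll_min[of "ll-1"] False ll_ge by fastforce
    ultimately show ?thesis using Q_iff by auto
  qed
qed

lemma ll_out: assumes "ll = n + 1" shows "ee = DD"
proof -
  have "j \<le> n" "n \<le> n" using j by auto
  moreover have "\<not> Q n" using ll_min[of n] assms by fastforce
  ultimately show ?thesis using Q_iff eeD by fastforce
qed

lemma ll_cases: "(ll \<le> n \<and> ee < DD) \<or> (ll = n + 1 \<and> ee = DD)"
proof (cases "ll \<le> n")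
  case True
  then have "Pn ll \<le> DD" using Pn_mono by simp
  then show ?thesis using ll_in(1)[OF True] True by simp
next
  case False then show ?thesis using ll_le ll_out by simp
qed

lemma DR_val: "DR n dem u j d = (if ll \<le> n then Pn ll - ee else 0)"
proof -
  have DRd: "DR n dem u j d = (if ll = j then d - u
       else if ll \<le> n then dem ll - (u - (d + (\<Sum>k\<in>{Suc j..ll - 1}. dem k))) else 0)"
    unfolding DR_def ll_def by (simp add: Let_def)
  show ?thesis
  proof (cases "ll = j")
    case True
    then have "ll \<le> n" using j by simp
    then show ?thesis using DRd True dpp ll_in unfolding ee_def by auto
  next
    case False
    show ?thesis
    proof (cases "ll \<le> n")
      case True
      have "j \<le> ll - 1" using ll_ge False by simp
      then have s: "d + (\<Sum>k\<in>{Suc j..ll - 1}. dem k) = Pn (ll-1) - pp" by (rule sum_eq)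
      have pl: "Pn ll = Pn (ll-1) + dem ll" using Pn_diff ll_ge j by simp
      have "Pn j \<le> Pn (ll - 1)" using Pn_mono \<open>j \<le> ll - 1\<close> by simp
      then show ?thesis using DRd False True s pl ll_in[OF True] pp_le unfolding ee_def by (auto simp: ac_simps)
    next
      case False2: False
      then show ?thesis using DRd False by simp
    qed
  qed
qed

lemma ovn_lo: "k < j \<Longrightarrow> ovn k pp ee = 0"
proof -
  assume "k < j"
  then have "Pn k \<le> Pn (j-1)" using Pn_mono by simp
  then show ?thesis unfolding ovn_def using pp_ge by simp
qed

lemma ovn_hi: "ll < k \<Longrightarrow> ll \<le> n \<Longrightarrow> ovn k pp ee = 0"
proof -
  assume a: "ll < k" "ll \<le> n"
  then have "Pn ll \<le> Pn (k-1)" using Pn_mono by simp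
  then show ?thesis unfolding ovn_def using ll_in(1)[OF a(2)] by simp
qed

lemma TC_val: "TC n dem c i u j d = serve i pp ee"
proof -
  define d' where "d' = DR n dem u j d"
  have TCd: "TC n dem c i u j d = (if ll = j then c i j * enat (d - d')
     else c i j * enat d + (\<Sum>k\<in>{Suc j..ll - 1}. c i k * enat (dem k))
          + (if ll \<le> n then c i ll * enat (dem ll - d') else 0))"
    unfolding TC_def ll_def d'_def by (simp add: Let_def)
  have jn: "j \<in> {1..n}" by (fact j)
  show ?thesis
  proof (cases "ll = j")
    case True
    then have ln: "ll \<le> n" using j by simp
    have g: "\<forall>k\<in>{1..n}. c i k * enat (ovn k pp ee) = (if k = j then c i j * enat (d - d') else 0)"
    proof
      fix k assume k: "k \<in> {1..n}"
      consider "k < j" | "k = j" | "j < k" by linarith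
      then show "c i k * enat (ovn k pp ee) = (if k = j then c i j * enat (d - d') else 0)"
      proof cases
        case 1 then show ?thesis using ovn_lo by (simp add: zero_enat_def[symmetric])
      next
        case 2
        have "ovn j pp ee = ee - pp" unfolding ovn_def using ll_in[OF ln] True pp_ge by simp
        moreover have "d - d' = ee - pp" using DR_val ln True dpp ll_in[OF ln] unfolding d'_def ee_def by simp
        ultimately show ?thesis using 2 by simp
      next
        case 3 then show ?thesis using ovn_hi[of k] True ln by (simp add: zero_enat_def[symmetric])
      qed
    qed
    have "serve i pp ee = (\<Sum>k\<in>{1..n}. if k = j then c i j * enat (d - d') else 0)"
      unfolding serve_def using g by (intro sum.cong) auto
    also have "\<dots> = c i j * enat (d - d')" using j by (simp add: sum.delta)
    finally show ?thesis using TCd True by simp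
  next
    case False
    then have jl: "j < ll" using ll_ge by simp
    have g: "\<forall>k\<in>{1..n}. c i k * enat (ovn k pp ee) =
       (if k = j then c i j * enat d else 0) + (if k \<in> {Suc j..ll - 1} then c i k * enat (dem k) else 0)
       + (if k = ll then c i ll * enat (dem ll - d') else 0)"
    proof
      fix k assume k: "k \<in> {1..n}"
      have pl1: "Pn (ll - 1) \<le> ee"
        using ll_cases ll_in(2) by (metis Pn_mono diff_le_self eeD ll_out le_refl add_diff_cancel_right')
      consider "k < j" | "k = j" | "j < k \<and> k < ll" | "k = ll" | "ll < k" by linarith
      then show "c i k * enat (ovn k pp ee) =
       (if k = j then c i j * enat d else 0) + (if k \<in> {Suc j..ll - 1} then c i k * enat (dem k) else 0)
       + (if k = ll then c i ll * enat (dem ll - d') else 0)"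
      proof cases
        case 1 then show ?thesis using ovn_lo jl by (simp add: zero_enat_def[symmetric])
      next
        case 2
        have "Pn j \<le> Pn (ll - 1)" using Pn_mono jl by simp
        then have "ovn j pp ee = d" unfolding ovn_def using pl1 pp_ge dpp by simp
        then show ?thesis using 2 jl by simp
      next
        case 3
        have "Pn k \<le> Pn (ll - 1)" "Pn j \<le> Pn (k-1)" using Pn_mono 3 by auto
        moreover have "Pn k = Pn (k-1) + dem k" using Pn_diff k by simp
        ultimately have "ovn k pp ee = dem k" unfolding ovn_def using pl1 pp_le by simp
        moreover have "k \<le> ll - 1" using 3 by linarith
        ultimately show ?thesis using 3 by simp
      next
        case 4
        then have ln: "ll \<le> n" using k by simp
        have "Pn j \<le> Pn (ll-1)" using Pn_mono jl by simp
        moreover have "Pn ll = Pn (ll-1) + dem ll" using Pn_diff ll_ge j by simp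
        ultimately have "ovn ll pp ee = dem ll - d'" unfolding ovn_def d'_def DR_val
          using ll_in[OF ln] pp_le ln by simp
        moreover have "\<not> ll \<le> ll - 1" using jl by linarith
        ultimately show ?thesis using 4 jl by simp
      next
        case 5
        then have ln: "ll \<le> n" using k by simp
        moreover have "\<not> k \<le> ll - 1" using 5 by linarith
        ultimately show ?thesis using ovn_hi[OF 5 ln] 5 jl by (simp add: zero_enat_def[symmetric])
      qed
    qed
    have sub: "{Suc j..ll - 1} \<subseteq> {1..n}" using ll_le by auto
    have "serve i pp ee = (\<Sum>k\<in>{1..n}. (if k = j then c i j * enat d else 0) + (if k \<in> {Suc j..ll - 1} then c i k * enat (dem k) else 0)
       + (if k = ll then c i ll * enat (dem ll - d') else 0))"
      unfolding serve_def using g by (intro sum.cong) auto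
    also have "\<dots> = c i j * enat d + (\<Sum>k\<in>{Suc j..ll - 1}. c i k * enat (dem k))
          + (if ll \<le> n then c i ll * enat (dem ll - d') else 0)"
    proof -
      have "(\<Sum>k\<in>{1..n}. if k \<in> {Suc j..ll - 1} then c i k * enat (dem k) else 0) = (\<Sum>k\<in>{Suc j..ll - 1}. c i k * enat (dem k))"
      proof -
        have I: "{1..n} \<inter> {Suc j..ll - 1} = {Suc j..ll - 1}" using sub by blast
        have "(\<Sum>k\<in>{1..n}. if k \<in> {Suc j..ll - 1} then c i k * enat (dem k) else 0)
           = (\<Sum>k\<in>{1..n} \<inter> {Suc j..ll - 1}. c i k * enat (dem k))"
          by (rule sum.inter_restrict[symmetric]) simp
        then show ?thesis by (simp only: I)
      qed
      moreover have "(\<Sum>k\<in>{1..n}. if k = ll then c i ll * enat (dem ll - d') else 0) = (if ll \<le> n then c i ll * enat (dem ll - d') else 0)"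
        using sum.delta[of "{1..n}" ll "\<lambda>_. c i ll * enat (dem ll - d')"] ll_ge j by auto
      ultimately show ?thesis using j by (simp add: sum.distrib sum.delta)
    qed
    finally show ?thesis using TCd False by simp
  qed
qed

lemma NC_DR: "(NC n dem u j d \<in> {1..n} \<and> DR n dem u j d \<le> dem (NC n dem u j d) \<and>
      Pn (NC n dem u j d) - DR n dem u j d = Pn j - d + u) \<or>
   (NC n dem u j d = n + 1 \<and> DR n dem u j d = 0 \<and> Pn j - d + u = DD)"
proof -
  note L = ll_cases
  show ?thesis
  proof (cases "ll \<le> n")
    case True
    have pl: "Pn ll = Pn (ll-1) + dem ll" using Pn_diff ll_ge j by simp
    have "DR n dem u j d = Pn ll - ee" using DR_val True by simp
    moreover have "ll \<in> {1..n}" using True ll_ge j by simp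
    moreover have "Pn ll - ee \<le> dem ll" using ll_in(2)[OF True] pl by arith
    moreover have "Pn ll - (Pn ll - ee) = ee" using ll_in(1)[OF True] by arith
    ultimately show ?thesis unfolding ll_def ee_def pp_def by auto
  next
    case False
    then have "ll = n + 1" "ee = DD" using L by auto
    moreover have "DR n dem u j d = 0" using DR_val False by simp
    ultimately show ?thesis unfolding ll_def ee_def pp_def by auto
  qed
qed

lemma TC_val': "TC n dem c i u j d = serve i (Pn j - d) (Pn j - d + u)"
  using TC_val unfolding pp_def ee_def .

end

end

context cflp begin

lemma rest_eq: assumes "j \<in> {1..n}" "d \<le> dem j" shows "rest n dem j d = DD - (Pn j - d)"
proof -
  have "Pn j = Pn (j-1) + dem j" using Pn_diff assms by simp
  then show ?thesis using Pn_split[of j n] assms unfolding rest_def by auto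
qed

lemma C_link:
  fixes C :: "nat \<Rightarrow> nat \<Rightarrow> nat \<Rightarrow> enat"
  assumes base_inf: "\<forall>j\<in>{1..n}. \<forall>d\<le>dem j. 0 < rest n dem j d \<longrightarrow> C (m + 1) j d = \<infinity>"
    and base_zero: "\<forall>j\<in>{1..n}. \<forall>d\<le>dem j. rest n dem j d = 0 \<longrightarrow> C (m + 1) j d = 0"
    and base_end: "\<forall>i\<in>{1..m + 1}. C i (n + 1) 0 = 0"
    and recur: "\<forall>i\<in>{1..m}. \<forall>j\<in>{1..n}. \<forall>d\<le>dem j.
       C i j d = min (C (i + 1) j d)
         (enat (f i) + (INF u\<in>{1..min (U i) (rest n dem j d)}.
             TC n dem c i u j d + C (i + 1) (NC n dem u j d) (DR n dem u j d)))"
  shows "i \<in> {1..m+1} \<Longrightarrow> j \<in> {1..n} \<Longrightarrow> d \<le> dem j \<Longrightarrow> C i j d = R i (Pn j - d)"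
proof (induction "m + 1 - i" arbitrary: i j d)
  case 0
  then have i: "i = m + 1" by auto
  show ?case
  proof (cases "0 < rest n dem j d")
    case True
    then show ?thesis using base_inf 0 i R_base rest_eq[OF "0.prems"(2,3)] by auto
  next
    case False
    then show ?thesis using base_zero 0 i R_base rest_eq[OF "0.prems"(2,3)] by auto
  qed
next
  case (Suc t)
  then have i: "i \<in> {1..m}" by auto
  have IH: "\<And>j' d'. j' \<in> {1..n} \<Longrightarrow> d' \<le> dem j' \<Longrightarrow> C (i+1) j' d' = R (i+1) (Pn j' - d')"
    using Suc i by auto
  have j: "j \<in> {1..n}" and d: "d \<le> dem j" by fact+
  have re: "rest n dem j d = DD - (Pn j - d)" by (rule rest_eq[OF j d])
  have "(INF u\<in>{1..min (U i) (rest n dem j d)}. TC n dem c i u j d + C (i + 1) (NC n dem u j d) (DR n dem u j d))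
      = (INF u\<in>{1..min (U i) (DD - (Pn j - d))}. serve i (Pn j - d) (Pn j - d + u) + R (i+1) (Pn j - d + u))"
    unfolding re
  proof (rule INF_cong[OF refl])
    fix u assume "u \<in> {1..min (U i) (DD - (Pn j - d))}"
    then have u: "1 \<le> u" "u \<le> DD - (Pn j - d)" by auto
    have "C (i + 1) (NC n dem u j d) (DR n dem u j d) = R (i+1) (Pn j - d + u)"
      using NC_DR[OF j d u]
    proof
      assume h: "NC n dem u j d \<in> {1..n} \<and> DR n dem u j d \<le> dem (NC n dem u j d) \<and>
        Pn (NC n dem u j d) - DR n dem u j d = Pn j - d + u"
      then show ?thesis using IH[of "NC n dem u j d" "DR n dem u j d"] by simp
    next
      assume h: "NC n dem u j d = n + 1 \<and> DR n dem u j d = 0 \<and> Pn j - d + u = DD"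
      have "i + 1 \<in> {1..m+1}" using i by auto
      then show ?thesis using h base_end R_end by auto
    qed
    then show "TC n dem c i u j d + C (i + 1) (NC n dem u j d) (DR n dem u j d)
        = serve i (Pn j - d) (Pn j - d + u) + R (i+1) (Pn j - d + u)"
      using TC_val'[OF j d u] by simp
  qed
  then show ?case using recur i j d IH[OF j d] R_rec[OF i, of "Pn j - d"] by simp
qed

end

theorem theorem1:
  fixes m n :: nat
    and f U dem :: "nat \<Rightarrow> nat"
    and c :: "nat \<Rightarrow> nat \<Rightarrow> enat"
    and C :: "nat \<Rightarrow> nat \<Rightarrow> nat \<Rightarrow> enat"
  assumes dem_pos: "\<forall>j\<in>{1..n}. 0 < dem j"
    and monge: "\<forall>h i j k. 1 \<le> h \<and> h < i \<and> i \<le> m \<and> 1 \<le> j \<and> j < k \<and> k \<le> n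
                   \<longrightarrow> c h j + c i k \<le> c h k + c i j"
    and base_inf: "\<forall>j\<in>{1..n}. \<forall>d\<le>dem j. 0 < rest n dem j d \<longrightarrow> C (m + 1) j d = \<infinity>"
    and base_zero: "\<forall>j\<in>{1..n}. \<forall>d\<le>dem j. rest n dem j d = 0 \<longrightarrow> C (m + 1) j d = 0"
    and base_end: "\<forall>i\<in>{1..m + 1}. C i (n + 1) 0 = 0"
    and recur: "\<forall>i\<in>{1..m}. \<forall>j\<in>{1..n}. \<forall>d\<le>dem j.
       C i j d = min (C (i + 1) j d)
         (enat (f i) + (INF u\<in>{1..min (U i) (rest n dem j d)}.
             TC n dem c i u j d + C (i + 1) (NC n dem u j d) (DR n dem u j d)))"
  shows "\<forall>i\<in>{1..m}. \<forall>j\<in>{1..n}. \<forall>d\<le>dem j.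
           ereal_of_enat (C i j d) = sub_opt m n dem f U c i j d"
proof (intro ballI allI impI)
  interpret L: cflp m n f U dem c
    by unfold_locales (fact dem_pos monge)+
  fix i j d assume i: "i \<in> {1..m}" and j: "j \<in> {1..n}" and d: "d \<le> dem j"
  have "C i j d = L.R i (L.Pn j - d)"
    by (rule L.C_link[OF base_inf base_zero base_end recur]) (use i j d in auto)
  then show "ereal_of_enat (C i j d) = sub_opt m n dem f U c i j d"
    using L.sub_opt_eq[OF i j d] by simp
qed

end
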